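(* Assume the setting described in the context. Let $u_0\in\mathsf H_1$ and $0<T<T^*(u_0)$. Then there exists $n_0\in\mathbb N$ such that for all $n\ge n_0$ the approximate solution $u_n=\Phi_n(\cdot)u_0$ is defined on $[0,T]$ (i.e. $T<T_n^*(u_0)$), and $$\lim_{n\to\infty}\max_{t\in[0,T]}\|u(t)-u_n(t)\|_{\mathsf H_1}=0,$$ where $u(t)=\Phi(t)u_0$ is the exact solution.
   Context: $\mathsf H_1$ is a complex Hilbert space, $A$ a self-adjoint operator in $\mathsf H_1$ and $\Phi^A(t)=e^{-itA}$ the unitary group it generates. $B:\mathsf H_1\to\mathsf H_1$ is locally Lipschitz with $B(0)=0$. For $u_0\in\mathsf H_1$, $u(t)=\Phi(t)u_0$ denotes the unique maximal solution $u\in C([0,T^*(u_0)),\mathsf H_1)$ of $u(t)=\Phi^A(t)u_0-i\int_0^t\Phi^A(t-t')B(u(t'))\,dt'$, with maximal existence time $T^*(u_0)\in(0,\infty]$ (if finite, $\|u(t)\|\to\infty$ as $t\uparrow T^*$). Weak convergence: $\alpha_n\rightharpoonup\alpha$ in $L^1_{\mathrm{loc}}(\mathbb R)$ means $\int_I\alpha_n\theta\to\int_I\alpha\theta$ for every compact interval $I$ and every $\theta\in C(I)$. Let $(\alpha_n),(\beta_n)$ be real-valued functions in $L^1_{\mathrm{loc}}(\mathbb R)$ with $\alpha_n\rightharpoonup1$, $\beta_n\rightharpoonup1$, and $|\alpha_n|\le\bar\alpha$, $|\beta_n|\le\bar\beta$ a.e. for some $\bar\alpha,\bar\beta\in L^1_{\mathrm{loc}}(\mathbb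 R)$. Set $\Phi^{A,n}(t_1,t_0)=\Phi^A\big(\int_{t_0}^{t_1}\alpha_n(s)\,ds\big)$. The approximate flow is $\Phi_n(t)u_0=u_n(t)$, where $u_n\in C([0,T_n^*(u_0)),\mathsf H_1)$ is the maximal solution of $u_n(t)=\Phi^{A,n}(t,0)u_0-i\int_0^t\beta_n(t')\Phi^{A,n}(t,t')B(u_n(t'))\,dt'$ (the mild form of $iw_t=(\alpha_nA+\beta_nB)w$, $w(0)=u_0$), with maximal existence time $T_n^*(u_0)$. *)

theory Defs
  imports "HOL-Analysis.Analysis"
begin

text \<open>The complex Hilbert space H1 is represented by its realification: a real Hilbert
space 'a (real_inner + complete_space) with a complex structure J (multiplication by i).\<close>

definition complex_structure :: "('a::real_inner \<Rightarrow> 'a) \<Rightarrow> bool" where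
  "complex_structure J \<longleftrightarrow> linear J \<and> (\<forall>x. J (J x) = - x)
     \<and> (\<forall>x y. inner (J x) (J y) = inner x y)"

text \<open>Self-adjoint (possibly unbounded) operator A with domain D, complex linear w.r.t. J.
For J-linear A and J-invariant D, the complex adjointness relation is equivalent to the real one.\<close>

definition self_adjoint_op :: "('a::real_inner \<Rightarrow> 'a) \<Rightarrow> 'a set \<Rightarrow> ('a \<Rightarrow> 'a) \<Rightarrow> bool" where
  "self_adjoint_op J D A \<longleftrightarrow>
     subspace D \<and> (\<forall>x\<in>D. J x \<in> D) \<and> closure D = UNIV
     \<and> (\<forall>x\<in>D. \<forall>y\<in>D. \<forall>a b. A (a *\<^sub>R x + b *\<^sub>R y) = a *\<^sub>R A x + b *\<^sub>R A y)
     \<and> (\<forall>x\<in>D. A (J x) = J (A x))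
     \<and> (\<forall>y z. (\<forall>x\<in>D. inner (A x) y = inner x z) \<longleftrightarrow> (y \<in> D \<and> z = A y))"

text \<open>U t = e^{-itA}: a strongly continuous group of complex-linear unitaries whose
generator is -iA (domain D).\<close>

definition unitary_group_generated :: "('a::real_inner \<Rightarrow> 'a) \<Rightarrow> 'a set \<Rightarrow> ('a \<Rightarrow> 'a) \<Rightarrow> (real \<Rightarrow> 'a \<Rightarrow> 'a) \<Rightarrow> bool" where
  "unitary_group_generated J D A U \<longleftrightarrow>
     U 0 = id \<and> (\<forall>s t. U (s + t) = U s \<circ> U t)
     \<and> (\<forall>t. linear (U t) \<and> (\<forall>x. U t (J x) = J (U t x)) \<and> (\<forall>x. norm (U t x) = norm x))
     \<and> (\<forall>x. continuous_on UNIV (\<lambda>t. U t x))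
     \<and> (\<forall>x. x \<in> D \<longleftrightarrow> (\<exists>v. ((\<lambda>t. U t x) has_vector_derivative v) (at 0)))
     \<and> (\<forall>x\<in>D. ((\<lambda>t. U t x) has_vector_derivative (- J (A x))) (at 0))"

definition loc_lipschitz :: "('a::real_normed_vector \<Rightarrow> 'a) \<Rightarrow> bool" where
  "loc_lipschitz B \<longleftrightarrow> (\<forall>R. \<exists>L. L-lipschitz_on (cball 0 R) B)"

definition loc_integrable :: "(real \<Rightarrow> real) \<Rightarrow> bool" where
  "loc_integrable f \<longleftrightarrow> (\<forall>a b. set_integrable lborel {a..b} f)"

definition weak_conv_one :: "(nat \<Rightarrow> real \<Rightarrow> real) \<Rightarrow> bool" where
  "weak_conv_one \<alpha> \<longleftrightarrow> (\<forall>a b \<theta>. continuous_on {a..b} \<theta> \<longrightarrow>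
      (\<lambda>n. LINT s:{a..b}|lborel. \<alpha> n s * \<theta> s) \<longlonglongrightarrow> (LINT s:{a..b}|lborel. \<theta> s))"

definition mild_sol :: "('a::{real_normed_vector} \<Rightarrow> 'a) \<Rightarrow> (real \<Rightarrow> 'a \<Rightarrow> 'a) \<Rightarrow> ('a \<Rightarrow> 'a)
    \<Rightarrow> 'a \<Rightarrow> real \<Rightarrow> (real \<Rightarrow> 'a) \<Rightarrow> bool" where
  "mild_sol J U B u0 T w \<longleftrightarrow> continuous_on {0..T} w \<and>
     (\<forall>t\<in>{0..T}. (\<lambda>s. U (t - s) (B (w s))) integrable_on {0..t} \<and>
        w t = U t u0 - J (integral {0..t} (\<lambda>s. U (t - s) (B (w s)))))"

text \<open>Phi^{A,n}(t1,t0) = U(int_{t0}^{t1} alpha_n) (used only for t0 \<le> t1).\<close>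

definition Phi_n :: "(real \<Rightarrow> 'a \<Rightarrow> 'a) \<Rightarrow> (real \<Rightarrow> real) \<Rightarrow> real \<Rightarrow> real \<Rightarrow> 'a \<Rightarrow> 'a" where
  "Phi_n U \<alpha> t1 t0 = U (LINT s:{t0..t1}|lborel. \<alpha> s)"

definition mild_sol_n :: "('a::{real_normed_vector} \<Rightarrow> 'a) \<Rightarrow> (real \<Rightarrow> 'a \<Rightarrow> 'a) \<Rightarrow> (real \<Rightarrow> real)
    \<Rightarrow> (real \<Rightarrow> real) \<Rightarrow> ('a \<Rightarrow> 'a) \<Rightarrow> 'a \<Rightarrow> real \<Rightarrow> (real \<Rightarrow> 'a) \<Rightarrow> bool" where
  "mild_sol_n J U \<alpha> \<beta> B u0 T w \<longleftrightarrow> continuous_on {0..T} w \<and>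
     (\<forall>t\<in>{0..T}. (\<lambda>s. \<beta> s *\<^sub>R Phi_n U \<alpha> t s (B (w s))) integrable_on {0..t} \<and>
        w t = Phi_n U \<alpha> t 0 u0 - J (integral {0..t} (\<lambda>s. \<beta> s *\<^sub>R Phi_n U \<alpha> t s (B (w s)))))"

end

theory Submission
  imports Defs "HOL-Analysis.Analysis"
begin

hide_const (open) Polynomial.content



lemma rsum_weighted_bound:
  fixes f :: "real \<Rightarrow> 'a::real_normed_vector"
  assumes p: "p tagged_division_of {a..b}"
    and le: "\<And>x. x \<in> {a..b} \<Longrightarrow> norm (f x) \<le> e * h x"
  shows "norm (\<Sum>(x,k)\<in>p. content k *\<^sub>R f x) \<le> e * (\<Sum>(x,k)\<in>p. content k *\<^sub>R h x)"
proof -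
  have fin: "finite p" using p by (rule tagged_division_of_finite)
  have "norm (\<Sum>(x,k)\<in>p. content k *\<^sub>R f x) \<le> (\<Sum>(x,k)\<in>p. norm (content k *\<^sub>R f x))"
    by (rule norm_sum[THEN order_trans]) (simp add: split_def)
  also have "\<dots> \<le> (\<Sum>(x,k)\<in>p. e * (content k *\<^sub>R h x))"
  proof (rule sum_mono, clarify)
    fix x k assume xk: "(x,k) \<in> p"
    then have "x \<in> {a..b}" using p by (meson subsetD tagged_division_ofD(2) tagged_division_ofD(3))
    then have "norm (f x) \<le> e * h x" by (rule le)
    moreover have "content k \<ge> 0" by simp
    ultimately show "norm (content k *\<^sub>R f x) \<le> e * (content k *\<^sub>R h x)"
      using mult_left_mono[of "norm (f x)" "e * h x" "content k"] by (simp add: mult.left_commute)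
  qed
  also have "\<dots> = e * (\<Sum>(x,k)\<in>p. content k *\<^sub>R h x)"
    by (simp add: sum_distrib_left split_def)
  finally show ?thesis .
qed

lemma tri4:
  fixes A A' C C' :: "'a::real_normed_vector"
  shows "norm (A - C) \<le> norm (A - A') + norm (A' - C') + norm (C - C')"
proof -
  have "norm (A - C) = norm ((A - A') + (A' - C') - (C - C'))" by (simp add: algebra_simps)
  also have "\<dots> \<le> norm ((A - A') + (A' - C')) + norm (C - C')" by (rule norm_triangle_ineq4)
  also have "\<dots> \<le> norm (A - A') + norm (A' - C') + norm (C - C')"
    using norm_triangle_ineq[of "A - A'" "A' - C'"] by linarith
  finally show ?thesis .
qed

lemma integrable_weighted_approx:
  fixes f :: "real \<Rightarrow> 'a::{real_normed_vector,complete_space}"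
  assumes h: "h integrable_on {a..b}"
    and approx: "\<And>e. e > 0 \<Longrightarrow> \<exists>f'. f' integrable_on {a..b} \<and> (\<forall>x\<in>{a..b}. norm (f x - f' x) \<le> e * h x)"
  shows "f integrable_on {a..b}"
proof -
  have "\<exists>\<gamma>. gauge \<gamma> \<and>
          (\<forall>\<D>1 \<D>2. \<D>1 tagged_division_of (cbox a b) \<and> \<gamma> fine \<D>1 \<and>
            \<D>2 tagged_division_of (cbox a b) \<and> \<gamma> fine \<D>2 \<longrightarrow>
            norm ((\<Sum>(x,K)\<in>\<D>1. content K *\<^sub>R f x) - (\<Sum>(x,K)\<in>\<D>2. content K *\<^sub>R f x)) < e)"
    if e: "e > 0" for e
  proof -
    define H where "H = \<bar>integral {a..b} h\<bar> + 1"
    have H: "H > 0" by (simp add: H_def add_pos_nonneg)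
    define e' where "e' = e / (4 * H)"
    have e': "e' > 0" using e H by (simp add: e'_def)
    obtain f' where f': "f' integrable_on {a..b}" and ff': "\<forall>x\<in>{a..b}. norm (f x - f' x) \<le> e' * h x"
      using approx[OF e'] by blast
    have "\<exists>\<gamma>. gauge \<gamma> \<and>
          (\<forall>\<D>1 \<D>2. \<D>1 tagged_division_of (cbox a b) \<and> \<gamma> fine \<D>1 \<and>
            \<D>2 tagged_division_of (cbox a b) \<and> \<gamma> fine \<D>2 \<longrightarrow>
            norm ((\<Sum>(x,K)\<in>\<D>1. content K *\<^sub>R f' x) - (\<Sum>(x,K)\<in>\<D>2. content K *\<^sub>R f' x)) < e/2)"
    proof -
      have "f' integrable_on cbox a b" using f' by (simp add: box_real)
      then have "\<forall>e>0. \<exists>\<gamma>. gauge \<gamma> \<and>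
          (\<forall>\<D>1 \<D>2. \<D>1 tagged_division_of (cbox a b) \<and> \<gamma> fine \<D>1 \<and>
            \<D>2 tagged_division_of (cbox a b) \<and> \<gamma> fine \<D>2 \<longrightarrow>
            norm ((\<Sum>(x,K)\<in>\<D>1. content K *\<^sub>R f' x) - (\<Sum>(x,K)\<in>\<D>2. content K *\<^sub>R f' x)) < e)"
        by (simp only: integrable_Cauchy)
      then show ?thesis using e by (simp only: box_real)
    qed
    then obtain \<gamma>1 where g1: "gauge \<gamma>1" and c1: "\<And>\<D>1 \<D>2. \<D>1 tagged_division_of {a..b} \<Longrightarrow> \<gamma>1 fine \<D>1 \<Longrightarrow>
            \<D>2 tagged_division_of {a..b} \<Longrightarrow> \<gamma>1 fine \<D>2 \<Longrightarrow>
            norm ((\<Sum>(x,K)\<in>\<D>1. content K *\<^sub>R f' x) - (\<Sum>(x,K)\<in>\<D>2. content K *\<^sub>R f' x)) < e/2"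
      by (auto simp: box_real)
    from h have "(h has_integral integral {a..b} h) {a..b}" by (rule integrable_integral)
    then obtain \<gamma>2 where g2: "gauge \<gamma>2" and c2: "\<And>\<D>. \<D> tagged_division_of {a..b} \<Longrightarrow> \<gamma>2 fine \<D> \<Longrightarrow>
        norm ((\<Sum>(x,k)\<in>\<D>. content k *\<^sub>R h x) - integral {a..b} h) < 1"
      unfolding has_integral_real by (auto dest!: spec[of _ 1])
    show ?thesis
    proof (intro exI conjI allI impI)
      show "gauge (\<lambda>x. \<gamma>1 x \<inter> \<gamma>2 x)" using g1 g2 by (rule gauge_Int)
      fix \<D>1 \<D>2
      assume A: "\<D>1 tagged_division_of cbox a b \<and> (\<lambda>x. \<gamma>1 x \<inter> \<gamma>2 x) fine \<D>1 \<and>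
           \<D>2 tagged_division_of cbox a b \<and> (\<lambda>x. \<gamma>1 x \<inter> \<gamma>2 x) fine \<D>2"
      then have d1: "\<D>1 tagged_division_of {a..b}" and d2: "\<D>2 tagged_division_of {a..b}"
        and f11: "\<gamma>1 fine \<D>1" and f12: "\<gamma>2 fine \<D>1" and f21: "\<gamma>1 fine \<D>2" and f22: "\<gamma>2 fine \<D>2"
        by (auto simp: box_real fine_Int)
      have bnd: "norm ((\<Sum>(x,K)\<in>\<D>. content K *\<^sub>R f x) - (\<Sum>(x,K)\<in>\<D>. content K *\<^sub>R f' x)) \<le> e' * H"
        if d: "\<D> tagged_division_of {a..b}" "\<gamma>2 fine \<D>" for \<D>
      proof -
        have "(\<Sum>(x,K)\<in>\<D>. content K *\<^sub>R f x) - (\<Sum>(x,K)\<in>\<D>. content K *\<^sub>R f' x)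
              = (\<Sum>(x,K)\<in>\<D>. content K *\<^sub>R (f x - f' x))"
          by (simp add: split_def scaleR_diff_right sum_subtractf)
        also have "norm \<dots> \<le> e' * (\<Sum>(x,k)\<in>\<D>. content k *\<^sub>R h x)"
          by (rule rsum_weighted_bound[OF d(1)]) (use ff' in auto)
        also have "\<dots> \<le> e' * H"
        proof -
          have "(\<Sum>(x,k)\<in>\<D>. content k *\<^sub>R h x) \<le> H"
            using c2[OF d] by (simp add: H_def)
          then show ?thesis using e' by (simp add: mult_left_mono)
        qed
        finally show ?thesis .
      qed
      have "norm ((\<Sum>(x,K)\<in>\<D>1. content K *\<^sub>R f x) - (\<Sum>(x,K)\<in>\<D>2. content K *\<^sub>R f x))
         \<le> norm ((\<Sum>(x,K)\<in>\<D>1. content K *\<^sub>R f x) - (\<Sum>(x,K)\<in>\<D>1. content K *\<^sub>R f' x))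
           + norm ((\<Sum>(x,K)\<in>\<D>1. content K *\<^sub>R f' x) - (\<Sum>(x,K)\<in>\<D>2. content K *\<^sub>R f' x))
           + norm ((\<Sum>(x,K)\<in>\<D>2. content K *\<^sub>R f x) - (\<Sum>(x,K)\<in>\<D>2. content K *\<^sub>R f' x))"
        by (rule tri4)
      also have "\<dots> < e' * H + e/2 + e' * H"
        by (rule add_less_le_mono[OF add_le_less_mono[OF bnd[OF d1 f12] c1[OF d1 f11 d2 f21]] bnd[OF d2 f22]])
      also have "\<dots> \<le> e" using H by (simp add: e'_def)
      finally show "norm ((\<Sum>(x,K)\<in>\<D>1. content K *\<^sub>R f x) - (\<Sum>(x,K)\<in>\<D>2. content K *\<^sub>R f x)) < e" .
    qed
  qed
  then have "f integrable_on cbox a b" unfolding integrable_Cauchy by blast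
  then show ?thesis by (simp add: box_real)
qed



lemma integrable_on_refl_interval[simp]: "f integrable_on {a::real}"
  using integrable_on_refl[of f a] by (simp add: box_real)

lemma step_cell_integrable:
  fixes \<beta> :: "real \<Rightarrow> real" and g :: "real \<Rightarrow> 'a::banach"
  assumes \<beta>: "\<beta> integrable_on {a..b}" and h0: "h0 > 0" and N: "a + real N * h0 = b"
  shows "(\<lambda>s. \<beta> s *\<^sub>R g (a + h0 * of_int \<lfloor>(s - a) / h0\<rfloor>)) integrable_on {a..b}"
proof -
  let ?f = "\<lambda>s. \<beta> s *\<^sub>R g (a + h0 * of_int \<lfloor>(s - a) / h0\<rfloor>)"
  have "?f integrable_on {a..a + real j * h0}" if "j \<le> N" for j
    using that
  proof (induction j)
    case 0
    then show ?case by simp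
  next
    case (Suc j)
    let ?c = "a + real j * h0" and ?d = "a + real (Suc j) * h0"
    have sub: "{?c..?d} \<subseteq> {a..b}"
    proof -
      have "real (Suc j) \<le> real N" using Suc.prems by simp
      then have "real (Suc j) * h0 \<le> real N * h0" using h0 by (simp add: mult_right_mono)
      then show ?thesis using N h0 by (auto simp: algebra_simps)
    qed
    have cell: "?f integrable_on {?c..?d}"
    proof (rule integrable_spike[where S = "{?d}"])
      show "(\<lambda>s. \<beta> s *\<^sub>R g (a + h0 * real j)) integrable_on {?c..?d}"
        by (rule integrable_on_scaleR_left, rule integrable_on_subinterval[OF \<beta> sub])
      show "negligible {?d}" by auto
      fix s assume s: "s \<in> {?c..?d} - {?d}"
      then have "real j \<le> (s - a) / h0" "(s - a) / h0 < real j + 1"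
        using h0 by (auto simp: field_simps)
      then have "\<lfloor>(s - a) / h0\<rfloor> = int j" by (simp add: floor_eq_iff)
      then show "?f s = \<beta> s *\<^sub>R g (a + h0 * real j)" by simp
    qed
    have left: "?f integrable_on {a..?c}" using Suc by simp
    show ?case
      by (rule Henstock_Kurzweil_Integration.integrable_combine[OF _ _ left cell]) (use h0 in auto)
  qed
  from this[of N] show ?thesis using N by simp
qed

lemma integrable_scaleR_continuous:
  fixes \<beta> :: "real \<Rightarrow> real" and g :: "real \<Rightarrow> 'a::banach"
  assumes \<beta>: "\<beta> absolutely_integrable_on {a..b}" and g: "continuous_on {a..b} g"
  shows "(\<lambda>s. \<beta> s *\<^sub>R g s) integrable_on {a..b}"
proof (cases "a < b")
  case False
  then show ?thesis
  proof (cases "a = b")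
    case True then show ?thesis by simp
  next
    case False then have "{a..b} = {}" using \<open>\<not> a < b\<close> by auto
    then show ?thesis using integrable_on_empty by metis
  qed
next
  case ab: True
  have bi: "\<beta> integrable_on {a..b}" and nbi: "(\<lambda>x. norm (\<beta> x)) integrable_on {a..b}"
    using \<beta> by (auto simp: absolutely_integrable_on_def)
  have hi: "(\<lambda>s. \<bar>\<beta> s\<bar> + 1) integrable_on {a..b}"
    using nbi by (intro integrable_add) (auto simp: integrable_on_const)
  show ?thesis
  proof (rule integrable_weighted_approx[OF hi])
    fix e :: real assume e: "e > 0"
    have "uniformly_continuous_on {a..b} g" using g compact_uniformly_continuous by blast
    then obtain d where d: "d > 0" and dg: "\<And>x y. x \<in> {a..b} \<Longrightarrow> y \<in> {a..b} \<Longrightarrow> dist y x < d \<Longrightarrow> dist (g y) (g x) < e"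
      using e unfolding uniformly_continuous_on_def by metis
    obtain N :: nat where N: "(b - a) / d < real N" using reals_Archimedean2 by blast
    have "0 < (b - a) / d" using ab d by simp
    then have Npos: "N > 0" using N by (cases N) auto
    define h0 where "h0 = (b - a) / real N"
    have h0: "h0 > 0" using ab Npos by (simp add: h0_def)
    have h0d: "h0 < d" using N d Npos ab by (simp add: h0_def field_simps)
    have Nb: "a + real N * h0 = b" using Npos by (simp add: h0_def)
    let ?p = "\<lambda>s. a + h0 * of_int \<lfloor>(s - a) / h0\<rfloor>"
    show "\<exists>f'. f' integrable_on {a..b} \<and> (\<forall>x\<in>{a..b}. norm (\<beta> x *\<^sub>R g x - f' x) \<le> e * (\<bar>\<beta> x\<bar> + 1))"
    proof (intro exI conjI ballI)
      show "(\<lambda>s. \<beta> s *\<^sub>R g (?p s)) integrable_on {a..b}"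
        by (rule step_cell_integrable[OF bi h0 Nb])
      fix x assume x: "x \<in> {a..b}"
      have fl1: "of_int \<lfloor>(x - a) / h0\<rfloor> \<le> (x - a) / h0" by (rule of_int_floor_le)
      have fl2: "(x - a) / h0 < of_int \<lfloor>(x - a) / h0\<rfloor> + 1" by (rule real_of_int_floor_add_one_gt)
      have fl0: "0 \<le> \<lfloor>(x - a) / h0\<rfloor>" using x h0 by auto
      have "h0 * of_int \<lfloor>(x - a) / h0\<rfloor> \<le> h0 * ((x - a) / h0)"
        using mult_left_mono[OF fl1, of h0] h0 by simp
      then have "h0 * of_int \<lfloor>(x - a) / h0\<rfloor> \<le> x - a" using h0 by simp
      moreover have "h0 * ((x - a) / h0) < h0 * (of_int \<lfloor>(x - a) / h0\<rfloor> + 1)"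
        using mult_strict_left_mono[OF fl2 h0] .
      then have "x - a < h0 * of_int \<lfloor>(x - a) / h0\<rfloor> + h0" using h0 by (simp add: distrib_left)
      moreover have "0 \<le> h0 * of_int \<lfloor>(x - a) / h0\<rfloor>" using fl0 h0 by simp
      ultimately have px: "?p x \<in> {a..b}" and dpx: "dist x (?p x) < d" using x h0d
        by (auto simp: dist_real_def)
      have "norm (g x - g (?p x)) < e" using dg[OF px x] dpx by (simp add: dist_norm dist_commute)
      then have "norm (\<beta> x *\<^sub>R g x - \<beta> x *\<^sub>R g (?p x)) \<le> \<bar>\<beta> x\<bar> * e"
        by (simp add: scaleR_diff_right[symmetric] mult_left_mono)
      also have "\<dots> \<le> e * (\<bar>\<beta> x\<bar> + 1)" using e by (simp add: algebra_simps)
      finally show "norm (\<beta> x *\<^sub>R g x - \<beta> x *\<^sub>R g (?p x)) \<le> e * (\<bar>\<beta> x\<bar> + 1)" .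
    qed
  qed
qed



lemma integrable_scaleR_cont:
  fixes \<beta> :: "real \<Rightarrow> real" and g :: "real \<Rightarrow> 'a::{real_normed_vector,complete_space}"
  assumes \<beta>: "\<beta> absolutely_integrable_on {a..b}" and g: "continuous_on {a..b} g"
  shows "(\<lambda>s. \<beta> s *\<^sub>R g s) integrable_on {a..b}"
proof (cases "a < b")
  case False
  then show ?thesis
  proof (cases "a = b")
    case True then show ?thesis using integrable_on_refl[of _ a] by (simp add: box_real)
  next
    case False then have "{a..b} = {}" using \<open>\<not> a < b\<close> by auto
    then show ?thesis using integrable_on_empty by metis
  qed
next
  case ab: True
  have nbi: "(\<lambda>x. norm (\<beta> x)) integrable_on {a..b}"
    using \<beta> by (auto simp: absolutely_integrable_on_def)
  have hi: "(\<lambda>s. \<bar>\<beta> s\<bar> + 1) integrable_on {a..b}"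
    using nbi by (intro integrable_add) (auto simp: integrable_on_const)
  show ?thesis
  proof (rule integrable_weighted_approx[OF hi])
    fix e :: real assume e: "e > 0"
    have "uniformly_continuous_on {a..b} g" using g compact_uniformly_continuous by blast
    then obtain d where d: "d > 0" and dg: "\<And>x y. x \<in> {a..b} \<Longrightarrow> y \<in> {a..b} \<Longrightarrow> dist y x < d \<Longrightarrow> dist (g y) (g x) < e"
      using e unfolding uniformly_continuous_on_def by metis
    obtain N :: nat where N: "(b - a) / d < real N" using reals_Archimedean2 by blast
    have "0 < (b - a) / d" using ab d by simp
    then have Npos: "N > 0" using N by (cases N) auto
    define h0 where "h0 = (b - a) / real N"
    have h0: "h0 > 0" using ab Npos by (simp add: h0_def)
    have h0d: "h0 < d" using N d Npos ab by (simp add: h0_def field_simps)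
    have Nb: "a + real N * h0 = b" using Npos by (simp add: h0_def)
    define c where "c j = a + real j * h0" for j :: nat
    have cab: "c j \<in> {a..b}" if "j \<le> N" for j
    proof -
      have "real j * h0 \<le> real N * h0" using that h0 by (simp add: mult_right_mono)
      then show ?thesis using Nb h0 by (auto simp: c_def)
    qed
    define \<phi> where "\<phi> j x = max 0 (h0 - \<bar>x - c j\<bar>)" for j x
    define S where "S x = (\<Sum>k\<le>N. \<phi> k x)" for x
    have Spos: "S x > 0" if x: "x \<in> {a..b}" for x
    proof -
      define m where "m = nat \<lfloor>(x - a) / h0\<rfloor>"
      have fl0: "0 \<le> \<lfloor>(x - a) / h0\<rfloor>" using x h0 by auto
      have fl1: "of_int \<lfloor>(x - a) / h0\<rfloor> \<le> (x - a) / h0" by (rule of_int_floor_le)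
      have fl2: "(x - a) / h0 < of_int \<lfloor>(x - a) / h0\<rfloor> + 1" by (rule real_of_int_floor_add_one_gt)
      have rm: "real m = of_int \<lfloor>(x - a) / h0\<rfloor>" using fl0 by (simp add: m_def)
      have "h0 * real m \<le> h0 * ((x - a) / h0)" using mult_left_mono[OF fl1, of h0] h0 rm by simp
      then have l1: "real m * h0 \<le> x - a" using h0 by (simp add: mult.commute)
      have "h0 * ((x - a) / h0) < h0 * (real m + 1)" using mult_strict_left_mono[OF fl2 h0] rm by simp
      then have l2: "x - a < real m * h0 + h0" using h0 by (simp add: distrib_left mult.commute)
      have "(x - a) / h0 \<le> real N" using x h0 Nb by (simp add: field_simps)
      then have "m \<le> N" using rm fl1 by (simp add: m_def nat_le_iff floor_le_iff)
      moreover have "\<phi> m x > 0" using l1 l2 by (simp add: \<phi>_def c_def)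
      moreover have "\<phi> k x \<ge> 0" for k by (simp add: \<phi>_def)
      ultimately have "\<phi> m x \<le> S x" unfolding S_def by (intro member_le_sum) auto
      then show ?thesis using \<open>\<phi> m x > 0\<close> by linarith
    qed
    define \<psi> where "\<psi> j x = \<phi> j x / S x" for j x
    have \<psi>cont: "continuous_on {a..b} (\<psi> j)" for j
    proof -
      have c1: "continuous_on {a..b} (\<phi> j)" for j unfolding \<phi>_def by (intro continuous_intros)
      have c2: "continuous_on {a..b} S" unfolding S_def by (intro continuous_on_sum c1) 
      have "\<forall>x\<in>{a..b}. S x \<noteq> 0" using Spos by fastforce
      then show ?thesis unfolding \<psi>_def by (intro continuous_on_divide c1 c2)
    qed
    have \<psi>sum: "(\<Sum>j\<le>N. \<psi> j x) = 1" if "x \<in> {a..b}" for x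
      using Spos[OF that] by (simp add: \<psi>_def sum_divide_distrib[symmetric] S_def)
    have \<psi>nn: "\<psi> j x \<ge> 0" if "x \<in> {a..b}" for j x
      using Spos[OF that] by (simp add: \<psi>_def \<phi>_def)
    have \<psi>near: "norm (g x - g (c j)) \<le> e" if "x \<in> {a..b}" "j \<le> N" "\<psi> j x \<noteq> 0" for j x
    proof -
      have "\<phi> j x \<noteq> 0" using that(3) by (simp add: \<psi>_def)
      then have "\<bar>x - c j\<bar> < h0" by (simp add: \<phi>_def max_def split: if_splits)
      then have "dist x (c j) < d" using h0d by (simp add: dist_real_def)
      then have "dist (g x) (g (c j)) < e" using dg[OF cab[OF that(2)] that(1)] by simp
      then show ?thesis by (simp add: dist_norm)
    qed
    show "\<exists>f'. f' integrable_on {a..b} \<and> (\<forall>x\<in>{a..b}. norm (\<beta> x *\<^sub>R g x - f' x) \<le> e * (\<bar>\<beta> x\<bar> + 1))"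
    proof (intro exI conjI ballI)
      show "(\<lambda>x. \<Sum>j\<le>N. (\<beta> x * \<psi> j x) *\<^sub>R g (c j)) integrable_on {a..b}"
      proof (rule integrable_sum)
        fix j
        have "(\<lambda>x. \<beta> x *\<^sub>R \<psi> j x) integrable_on {a..b}"
          by (rule integrable_scaleR_continuous[OF \<beta> \<psi>cont])
        then show "(\<lambda>x. (\<beta> x * \<psi> j x) *\<^sub>R g (c j)) integrable_on {a..b}"
          by (intro integrable_on_scaleR_left) simp
      qed simp
      fix x assume x: "x \<in> {a..b}"
      have "\<beta> x *\<^sub>R g x - (\<Sum>j\<le>N. (\<beta> x * \<psi> j x) *\<^sub>R g (c j))
          = \<beta> x *\<^sub>R (\<Sum>j\<le>N. \<psi> j x *\<^sub>R (g x - g (c j)))"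
        by (simp add: scaleR_sum_right scaleR_diff_right sum_subtractf \<psi>sum[OF x] scaleR_sum_left[symmetric])
      also have "norm \<dots> \<le> \<bar>\<beta> x\<bar> * (\<Sum>j\<le>N. \<psi> j x * e)"
      proof -
        have "norm (\<Sum>j\<le>N. \<psi> j x *\<^sub>R (g x - g (c j))) \<le> (\<Sum>j\<le>N. norm (\<psi> j x *\<^sub>R (g x - g (c j))))"
          by (rule norm_sum)
        also have "\<dots> \<le> (\<Sum>j\<le>N. \<psi> j x * e)"
        proof (rule sum_mono)
          fix j assume j: "j \<in> {..N}"
          show "norm (\<psi> j x *\<^sub>R (g x - g (c j))) \<le> \<psi> j x * e"
          proof (cases "\<psi> j x = 0")
            case True then show ?thesis by simp
          next
            case False
            then show ?thesis using \<psi>near[OF x _ False] j \<psi>nn[OF x, of j]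
              by (simp add: mult_left_mono)
          qed
        qed
        finally show ?thesis by (simp add: mult_left_mono)
      qed
      also have "\<dots> = \<bar>\<beta> x\<bar> * e" using \<psi>sum[OF x] by (simp add: sum_distrib_right[symmetric])
      also have "\<dots> \<le> e * (\<bar>\<beta> x\<bar> + 1)" using e by (simp add: algebra_simps)
      finally show "norm (\<beta> x *\<^sub>R g x - (\<Sum>j\<le>N. (\<beta> x * \<psi> j x) *\<^sub>R g (c j))) \<le> e * (\<bar>\<beta> x\<bar> + 1)" .
    qed
  qed
qed



lemma inner_ext_eq:
  fixes u v :: "'a::real_inner"
  assumes "\<And>y. inner y u = inner y v" shows "u = v"
proof -
  have "inner (u - v) (u - v) = 0" using assms[of "u - v"] by (simp add: inner_diff_right)
  then show ?thesis by simp
qed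

lemma integral_inner_left:
  fixes f :: "real \<Rightarrow> 'a::real_inner"
  assumes "f integrable_on S"
  shows "(\<lambda>x. inner y (f x)) integrable_on S" "integral S (\<lambda>x. inner y (f x)) = inner y (integral S f)"
proof -
  have bl: "bounded_linear (inner y)" by (rule bounded_linear_inner_right)
  show "(\<lambda>x. inner y (f x)) integrable_on S"
    using integrable_linear[OF assms bl] by (simp add: o_def)
  show "integral S (\<lambda>x. inner y (f x)) = inner y (integral S f)"
    using integral_linear[OF assms bl] by (simp add: o_def)
qed

lemma integral_combine_inner:
  fixes f :: "real \<Rightarrow> 'a::real_inner"
  assumes "a \<le> c" "c \<le> b" "f integrable_on {a..c}" "f integrable_on {c..b}" "f integrable_on {a..b}"
  shows "integral {a..c} f + integral {c..b} f = integral {a..b} f"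
proof (rule inner_ext_eq)
  fix y
  have "integral {a..c} (\<lambda>x. inner y (f x)) + integral {c..b} (\<lambda>x. inner y (f x)) = integral {a..b} (\<lambda>x. inner y (f x))"
    by (rule Henstock_Kurzweil_Integration.integral_combine) (use assms integral_inner_left in auto)
  then show "inner y (integral {a..c} f + integral {c..b} f) = inner y (integral {a..b} f)"
    using assms by (simp add: inner_add_right integral_inner_left)
qed

lemma norm_integral_le_inner:
  fixes f :: "real \<Rightarrow> 'a::real_inner"
  assumes f: "f integrable_on S" and g: "g integrable_on S" and le: "\<And>x. x \<in> S \<Longrightarrow> norm (f x) \<le> g x"
  shows "norm (integral S f) \<le> integral S g"
proof -
  let ?I = "integral S f"
  have "(norm ?I)\<^sup>2 = inner ?I ?I" by (simp add: power2_norm_eq_inner)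
  also have "\<dots> = integral S (\<lambda>x. inner ?I (f x))" using integral_inner_left[OF f] by simp
  also have "\<dots> \<le> integral S (\<lambda>x. norm ?I * g x)"
  proof (rule integral_le)
    show "(\<lambda>x. inner ?I (f x)) integrable_on S" using integral_inner_left[OF f] by simp
    show "(\<lambda>x. norm ?I * g x) integrable_on S" using integrable_cmul[OF g, of "norm ?I"] by simp
    fix x assume "x \<in> S"
    have "inner ?I (f x) \<le> norm ?I * norm (f x)" by (rule norm_cauchy_schwarz)
    also have "\<dots> \<le> norm ?I * g x" using le[OF \<open>x \<in> S\<close>] by (simp add: mult_left_mono)
    finally show "inner ?I (f x) \<le> norm ?I * g x" .
  qed
  also have "\<dots> = norm ?I * integral S g" by simp
  finally have *: "(norm ?I)\<^sup>2 \<le> norm ?I * integral S g" .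
  show ?thesis
  proof (cases "norm ?I = 0")
    case True
    have "0 \<le> integral S g"
      by (rule integral_nonneg[OF g]) (use le in \<open>auto intro: order_trans[OF norm_ge_zero]\<close>)
    then show ?thesis using True by simp
  next
    case False
    then have "norm ?I > 0" by simp
    then show ?thesis using * by (simp add: power2_eq_square)
  qed
qed

lemma lborel_to_HK:
  fixes f :: "real \<Rightarrow> real"
  assumes "set_integrable lborel S f"
  shows "f absolutely_integrable_on S" "(LINT x:S|lborel. f x) = integral S f"
proof -
  have m: "(\<lambda>x. indicator S x *\<^sub>R f x) \<in> borel_measurable lborel"
    using assms unfolding set_integrable_def by (rule borel_measurable_integrable)
  have "integrable lborel (\<lambda>x. indicator S x *\<^sub>R f x)" using assms unfolding set_integrable_def .
  then have "integrable lebesgue (\<lambda>x. indicator S x *\<^sub>R f x)"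
    using integrable_completion[OF m] by simp
  then show ai: "f absolutely_integrable_on S" unfolding set_integrable_def .
  have "(LINT x:S|lborel. f x) = (LINT x:S|lebesgue. f x)"
    unfolding set_lebesgue_integral_def using integral_completion[OF m] by simp
  also have "\<dots> = integral S f" using set_lebesgue_integral_eq_integral(2)[OF ai] .
  finally show "(LINT x:S|lborel. f x) = integral S f" .
qed

lemma AE_integral_le:
  fixes f g :: "real \<Rightarrow> real"
  assumes f: "f integrable_on S" and g: "g integrable_on S" and ae: "AE x in lborel. f x \<le> g x"
  shows "integral S f \<le> integral S g"
proof -
  from ae obtain N where sub: "{x \<in> space lborel. \<not> f x \<le> g x} \<subseteq> N" and
    N0: "emeasure lborel N = 0" and Ns: "N \<in> sets lborel"
    by (rule AE_E)
  have N: "N \<in> null_sets lborel" using N0 Ns by (simp add: null_sets_def)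
  have "N \<in> null_sets lebesgue" using N null_sets_completionI by blast
  then have negN: "negligible N" by (simp add: negligible_iff_null_sets)
  define f' where "f' x = (if x \<in> N then g x else f x)" for x
  have eq: "integral S f' = integral S f" using negN by (intro integral_spike[of N]) (auto simp: f'_def)
  have fi': "f' integrable_on S" using negN f by (intro integrable_spike[OF f negN]) (auto simp: f'_def)
  have "integral S f' \<le> integral S g"
    by (rule integral_le[OF fi' g]) (use sub in \<open>auto simp: f'_def\<close>)
  then show ?thesis using eq by simp
qed



lemma ai_abs:
  fixes f :: "real \<Rightarrow> real"
  assumes "f absolutely_integrable_on S" shows "(\<lambda>x. \<bar>f x\<bar>) absolutely_integrable_on S"
proof -
  have "f integrable_on S" "(\<lambda>x. norm (f x)) integrable_on S" using assms by (auto simp: absolutely_integrable_on_def)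
  then show ?thesis by (intro abs_absolutely_integrableI_1) auto
qed

lemma ai_const: "(\<lambda>x. c::real) absolutely_integrable_on {a..b::real}"
  using absolutely_integrable_continuous_real[of a b "\<lambda>x. c"] by simp

lemma ai_add: fixes f g :: "real \<Rightarrow> real"
  shows "f absolutely_integrable_on S \<Longrightarrow> g absolutely_integrable_on S \<Longrightarrow> (\<lambda>x. f x + g x) absolutely_integrable_on S"
  by (rule set_integral_add(1))

lemma ai_diff: fixes f g :: "real \<Rightarrow> real"
  shows "f absolutely_integrable_on S \<Longrightarrow> g absolutely_integrable_on S \<Longrightarrow> (\<lambda>x. f x - g x) absolutely_integrable_on S"
  by (rule set_integral_diff(1))

lemma ai_cmult: fixes f :: "real \<Rightarrow> real"
  shows "f absolutely_integrable_on S \<Longrightarrow> (\<lambda>x. c * f x) absolutely_integrable_on S"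
  by (rule set_integrable_mult_right)

lemma ai_sub: fixes f :: "real \<Rightarrow> real"
  shows "f absolutely_integrable_on {a..b} \<Longrightarrow> {c..d} \<subseteq> {a..b} \<Longrightarrow> f absolutely_integrable_on {c..d}"
  by (rule absolutely_integrable_on_subinterval)

lemma ai_integrable: fixes f :: "real \<Rightarrow> real"
  shows "f absolutely_integrable_on S \<Longrightarrow> f integrable_on S"
  by (simp add: absolutely_integrable_on_def)

lemma ai_cont_integrable:
  fixes \<beta> g :: "real \<Rightarrow> real"
  assumes "\<beta> absolutely_integrable_on {a..b}" "continuous_on {a..b} g"
  shows "(\<lambda>s. \<beta> s * g s) integrable_on {a..b}"
  using integrable_scaleR_continuous[OF assms] by simp

lemma norm_int_scaleR_le:
  fixes \<beta> :: "real \<Rightarrow> real" and g :: "real \<Rightarrow> 'a::{real_inner,complete_space}"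
  assumes \<beta>: "\<beta> absolutely_integrable_on {a..b}" and g: "continuous_on {a..b} g"
  shows "norm (integral {a..b} (\<lambda>s. \<beta> s *\<^sub>R g s)) \<le> integral {a..b} (\<lambda>s. \<bar>\<beta> s\<bar> * norm (g s))"
proof (rule norm_integral_le_inner)
  show "(\<lambda>s. \<beta> s *\<^sub>R g s) integrable_on {a..b}" by (rule integrable_scaleR_cont[OF \<beta> g])
  show "(\<lambda>s. \<bar>\<beta> s\<bar> * norm (g s)) integrable_on {a..b}"
    by (rule ai_cont_integrable[OF ai_abs[OF \<beta>]]) (intro continuous_intros g)
qed simp

lemma continuous_on_dominated:
  fixes f :: "real \<Rightarrow> 'a::real_normed_vector" and h :: "real \<Rightarrow> real"
  assumes h: "continuous_on S h" and K: "K \<ge> 0"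
    and le: "\<And>x y. x \<in> S \<Longrightarrow> y \<in> S \<Longrightarrow> dist (f x) (f y) \<le> K * dist (h x) (h y)"
  shows "continuous_on S f"
  unfolding continuous_on_iff
proof (intro ballI allI impI)
  fix x e assume x: "x \<in> S" and e: "(0::real) < e"
  have "e / (K + 1) > 0" using e K by simp
  then obtain d where d: "d > 0" and dh: "\<And>x'. x' \<in> S \<Longrightarrow> dist x' x < d \<Longrightarrow> dist (h x') (h x) < e / (K + 1)"
    using h x unfolding continuous_on_iff by metis
  show "\<exists>d>0. \<forall>x'\<in>S. dist x' x < d \<longrightarrow> dist (f x') (f x) < e"
  proof (intro exI conjI ballI impI, fact d)
    fix x' assume x': "x' \<in> S" "dist x' x < d"
    have "dist (f x') (f x) \<le> K * dist (h x') (h x)" using le x'(1) x by blast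
    also have "\<dots> \<le> K * (e / (K + 1))" using dh[OF x'] K by (intro mult_left_mono) auto
    also have "\<dots> < e" using e K by (simp add: field_simps)
    finally show "dist (f x') (f x) < e" .
  qed
qed

lemma indef_integral_cont:
  fixes \<beta> :: "real \<Rightarrow> real" and g :: "real \<Rightarrow> 'a::{real_inner,complete_space}"
  assumes \<beta>: "\<beta> absolutely_integrable_on {a..b}" and g: "continuous_on {a..b} g"
  shows "continuous_on {a..b} (\<lambda>t. integral {a..t} (\<lambda>s. \<beta> s *\<^sub>R g s))"
proof -
  obtain K where K: "K \<ge> 0" and Kb: "\<And>x. x \<in> {a..b} \<Longrightarrow> norm (g x) \<le> K"
  proof -
    have "compact (g ` {a..b})" by (rule compact_continuous_image[OF g compact_Icc])
    then obtain K0 where "\<forall>y\<in>g ` {a..b}. norm y \<le> K0" using compact_imp_bounded bounded_iff by metis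
    then show ?thesis using that[of "max K0 0"] by force
  qed
  define \<Phi> where "\<Phi> t = integral {a..t} (\<lambda>s. \<bar>\<beta> s\<bar>)" for t
  have ab: "(\<lambda>s. \<bar>\<beta> s\<bar>) absolutely_integrable_on {a..b}" by (rule ai_abs[OF \<beta>])
  have \<Phi>c: "continuous_on {a..b} \<Phi>" unfolding \<Phi>_def
    by (rule indefinite_integral_continuous_1) (rule ai_integrable[OF ab])
  have key: "dist (integral {a..x} (\<lambda>s. \<beta> s *\<^sub>R g s)) (integral {a..y} (\<lambda>s. \<beta> s *\<^sub>R g s)) \<le> K * dist (\<Phi> x) (\<Phi> y)"
    if xy: "x \<in> {a..b}" "y \<in> {a..b}" "x \<le> y" for x y
  proof -
    have sub: "\<And>c d. a \<le> c \<Longrightarrow> d \<le> b \<Longrightarrow> {c..d} \<subseteq> {a..b}" by auto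
    have ai: "\<And>c d. a \<le> c \<Longrightarrow> d \<le> b \<Longrightarrow> \<beta> absolutely_integrable_on {c..d}"
      using ai_sub[OF \<beta>] sub by blast
    have gc: "\<And>c d. a \<le> c \<Longrightarrow> d \<le> b \<Longrightarrow> continuous_on {c..d} g"
      using continuous_on_subset[OF g] sub by blast
    have I: "\<And>c d. a \<le> c \<Longrightarrow> d \<le> b \<Longrightarrow> (\<lambda>s. \<beta> s *\<^sub>R g s) integrable_on {c..d}"
      using integrable_scaleR_cont ai gc by blast
    have "integral {a..x} (\<lambda>s. \<beta> s *\<^sub>R g s) + integral {x..y} (\<lambda>s. \<beta> s *\<^sub>R g s) = integral {a..y} (\<lambda>s. \<beta> s *\<^sub>R g s)"
      by (rule integral_combine_inner) (use xy I in auto)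
    then have "dist (integral {a..x} (\<lambda>s. \<beta> s *\<^sub>R g s)) (integral {a..y} (\<lambda>s. \<beta> s *\<^sub>R g s)) = norm (integral {x..y} (\<lambda>s. \<beta> s *\<^sub>R g s))"
      by (metis add_diff_cancel_left' dist_norm norm_minus_commute)
    also have "\<dots> \<le> integral {x..y} (\<lambda>s. \<bar>\<beta> s\<bar> * norm (g s))"
      by (rule norm_int_scaleR_le[OF ai gc]) (use xy in auto)
    also have "\<dots> \<le> integral {x..y} (\<lambda>s. K * \<bar>\<beta> s\<bar>)"
    proof (rule integral_le)
      show "(\<lambda>s. \<bar>\<beta> s\<bar> * norm (g s)) integrable_on {x..y}"
        by (rule ai_cont_integrable[OF ai_abs[OF ai]]) (use xy gc in \<open>auto intro!: continuous_intros\<close>)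
      show "(\<lambda>s. K * \<bar>\<beta> s\<bar>) integrable_on {x..y}"
        using ai_integrable[OF ai_cmult[OF ai_abs[OF ai]]] xy by auto
      fix s assume "s \<in> {x..y}"
      then have "norm (g s) \<le> K" using Kb xy by auto
      then show "\<bar>\<beta> s\<bar> * norm (g s) \<le> K * \<bar>\<beta> s\<bar>"
        using mult_left_mono[of "norm (g s)" K "\<bar>\<beta> s\<bar>"] by (simp add: mult.commute)
    qed
    also have "\<dots> = K * integral {x..y} (\<lambda>s. \<bar>\<beta> s\<bar>)" by simp
    also have "integral {x..y} (\<lambda>s. \<bar>\<beta> s\<bar>) = \<Phi> y - \<Phi> x"
    proof -
      have "\<Phi> x + integral {x..y} (\<lambda>s. \<bar>\<beta> s\<bar>) = \<Phi> y" unfolding \<Phi>_def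
        by (rule Henstock_Kurzweil_Integration.integral_combine) (use xy ai_integrable[OF ai_abs[OF ai]] in auto)
      then show ?thesis by simp
    qed
    also have "K * (\<Phi> y - \<Phi> x) \<le> K * dist (\<Phi> x) (\<Phi> y)" using K by (simp add: dist_real_def mult_left_mono)
    finally show ?thesis .
  qed
  show ?thesis
  proof (rule continuous_on_dominated[OF \<Phi>c K])
    fix x y assume "x \<in> {a..b}" "y \<in> {a..b}"
    then show "dist (integral {a..x} (\<lambda>s. \<beta> s *\<^sub>R g s)) (integral {a..y} (\<lambda>s. \<beta> s *\<^sub>R g s)) \<le> K * dist (\<Phi> x) (\<Phi> y)"
      using key key[of y x] by (cases "x \<le> y") (auto simp: dist_commute)
  qed
qed



lemma real_combine:
  fixes f :: "real \<Rightarrow> real"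
  assumes "f integrable_on {a..b}" "a \<le> c" "c \<le> b"
  shows "integral {a..c} f + integral {c..b} f = integral {a..b} f"
  by (rule Henstock_Kurzweil_Integration.integral_combine) (use assms in auto)

lemma kernel_exp:
  fixes k :: "real \<Rightarrow> real"
  assumes k: "k absolutely_integrable_on {0..T}" and k0: "\<And>s. s \<in> {0..T} \<Longrightarrow> 0 \<le> k s" and c: "c > 0"
  shows "\<exists>l\<ge>0. \<forall>t\<in>{0..T}. integral {0..t} (\<lambda>s. k s * exp (l * s)) \<le> c * exp (l * t)"
proof -
  define K where "K t = integral {0..t} k" for t
  have ki: "k integrable_on {0..T}" by (rule ai_integrable[OF k])
  have kis: "k integrable_on {a..b}" if "0 \<le> a" "b \<le> T" for a b
    using integrable_on_subinterval[OF ki] that by auto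
  have kei: "(\<lambda>s. k s * exp (l * s)) integrable_on {a..b}" if "0 \<le> a" "b \<le> T" for a b l
    by (rule ai_cont_integrable[OF ai_sub[OF k]]) (use that in \<open>auto intro!: continuous_intros\<close>)
  have Kc: "continuous_on {0..T} K" unfolding K_def by (rule indefinite_integral_continuous_1[OF ki])
  have Kmono: "K a \<le> K b" if "0 \<le> a" "a \<le> b" "b \<le> T" for a b
  proof -
    have "K a + integral {a..b} k = K b" unfolding K_def by (rule real_combine) (use that kis in auto)
    moreover have "integral {a..b} k \<ge> 0" by (rule integral_nonneg) (use that kis k0 in auto)
    ultimately show ?thesis by linarith
  qed
  have K0: "K 0 = 0" by (simp add: K_def)
  have "uniformly_continuous_on {0..T} K" using Kc compact_uniformly_continuous by blast
  then obtain h where h: "h > 0" and hK: "\<And>x y. x \<in> {0..T} \<Longrightarrow> y \<in> {0..T} \<Longrightarrow> dist y x < h \<Longrightarrow> dist (K y) (K x) < c/2"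
    using c unfolding uniformly_continuous_on_def by (metis half_gt_zero)
  define h' where "h' = h / 2"
  have h': "h' > 0" "h' < h" using h by (auto simp: h'_def)
  define KT where "KT = max (K T) 0"
  define l where "l = ln (2 * KT / c + 1) / h'"
  have KT0: "KT \<ge> 0" by (simp add: KT_def)
  have l0: "l \<ge> 0" using KT0 c h' by (simp add: l_def)
  have el: "exp (l * h') = 2 * KT / c + 1"
  proof -
    have "l * h' = ln (2 * KT / c + 1)" using h' by (simp add: l_def)
    moreover have "2 * KT / c + 1 > 0" using KT0 c by (simp add: add_nonneg_pos)
    ultimately show ?thesis by simp
  qed
  have bound1: "integral {a..t} (\<lambda>s. k s * exp (l * s)) \<le> exp (l * t) * (K t - K a)"
    if a: "0 \<le> a" "a \<le> t" "t \<le> T" for a t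
  proof -
    have "integral {a..t} (\<lambda>s. k s * exp (l * s)) \<le> integral {a..t} (\<lambda>s. exp (l * t) * k s)"
    proof (rule integral_le)
      show "(\<lambda>s. k s * exp (l * s)) integrable_on {a..t}" using kei a by auto
      show "(\<lambda>s. exp (l * t) * k s) integrable_on {a..t}" using kis[of a t] a by auto
      fix s assume s: "s \<in> {a..t}"
      then have "exp (l * s) \<le> exp (l * t)" using l0 by (auto intro: mult_left_mono)
      moreover have "k s \<ge> 0" using k0 s a by auto
      ultimately show "k s * exp (l * s) \<le> exp (l * t) * k s" by (simp add: mult.commute mult_left_mono)
    qed
    also have "\<dots> = exp (l * t) * integral {a..t} k" by simp
    also have "integral {a..t} k = K t - K a"
    proof -
      have "K a + integral {a..t} k = K t" unfolding K_def by (rule real_combine) (use a kis in auto)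
      then show ?thesis by simp
    qed
    finally show ?thesis .
  qed
  show ?thesis
  proof (intro exI[of _ l] conjI ballI l0)
    fix t assume t: "t \<in> {0..T}"
    show "integral {0..t} (\<lambda>s. k s * exp (l * s)) \<le> c * exp (l * t)"
    proof (cases "t \<le> h'")
      case True
      have "integral {0..t} (\<lambda>s. k s * exp (l * s)) \<le> exp (l * t) * (K t - K 0)"
        using bound1[of 0 t] t by auto
      also have "K t - K 0 < c / 2"
      proof -
        have "dist (K t) (K 0) < c / 2" using hK[of 0 t] t True h' by (auto simp: dist_real_def)
        then show ?thesis unfolding dist_real_def using abs_ge_self[of "K t - K 0"] by linarith
      qed
      then have "exp (l * t) * (K t - K 0) \<le> exp (l * t) * (c / 2)" by simp
      finally have X: "integral {0..t} (\<lambda>s. k s * exp (l * s)) \<le> exp (l * t) * (c / 2)" .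
      have "0 < exp (l * t) * c" using c by simp
      then show ?thesis using X by (simp add: algebra_simps)
    next
      case False
      define t0 where "t0 = t - h'"
      have t0: "0 \<le> t0" "t0 \<le> t" using False h' by (auto simp: t0_def)
      have "integral {0..t0} (\<lambda>s. k s * exp (l * s)) + integral {t0..t} (\<lambda>s. k s * exp (l * s))
           = integral {0..t} (\<lambda>s. k s * exp (l * s))"
        by (rule real_combine) (use t t0 kei in auto)
      moreover have "integral {0..t0} (\<lambda>s. k s * exp (l * s)) \<le> c / 2 * exp (l * t)"
      proof -
        have "integral {0..t0} (\<lambda>s. k s * exp (l * s)) \<le> exp (l * t0) * (K t0 - K 0)"
          using bound1[of 0 t0] t0 t by auto
        also have "K t0 - K 0 \<le> KT" using Kmono[of t0 T] t0 t K0 by (auto simp: KT_def)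
        then have "exp (l * t0) * (K t0 - K 0) \<le> exp (l * t0) * KT" by simp
        also have "exp (l * t0) * KT = exp (l * t) * (KT / exp (l * h'))"
          by (simp add: t0_def right_diff_distrib exp_diff)
        also have "KT / exp (l * h') \<le> c / 2"
          using el c KT0 by (simp add: field_simps)
        then have "exp (l * t) * (KT / exp (l * h')) \<le> exp (l * t) * (c / 2)"
          by (rule mult_left_mono) simp
        finally show ?thesis by (simp add: mult.commute)
      qed
      moreover have "integral {t0..t} (\<lambda>s. k s * exp (l * s)) \<le> c / 2 * exp (l * t)"
      proof -
        have "integral {t0..t} (\<lambda>s. k s * exp (l * s)) \<le> exp (l * t) * (K t - K t0)"
          using bound1[of t0 t] t0 t by auto
        also have "K t - K t0 < c / 2"
        proof -
          have "dist (K t) (K t0) < c / 2" using hK[of t0 t] t t0 h' by (auto simp: dist_real_def t0_def)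
          then show ?thesis unfolding dist_real_def using abs_ge_self[of "K t - K t0"] by linarith
        qed
        then have "exp (l * t) * (K t - K t0) \<le> exp (l * t) * (c / 2)" by simp
        finally show ?thesis by (simp add: mult.commute)
      qed
      ultimately show ?thesis by linarith
    qed
  qed
qed

lemma gronwall_exp:
  fixes e k :: "real \<Rightarrow> real"
  assumes T: "0 \<le> T" and k: "k absolutely_integrable_on {0..T}" and k0: "\<And>s. s \<in> {0..T} \<Longrightarrow> 0 \<le> k s"
    and ec: "continuous_on {0..T} e" and e0: "\<And>s. s \<in> {0..T} \<Longrightarrow> 0 \<le> e s"
    and l: "l \<ge> 0" and ker: "\<And>t. t \<in> {0..T} \<Longrightarrow> integral {0..t} (\<lambda>s. k s * exp (l * s)) \<le> exp (l * t) / 2"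
    and le: "\<And>t. t \<in> {0..T} \<Longrightarrow> e t \<le> \<delta> + integral {0..t} (\<lambda>s. k s * e s)"
  shows "\<And>t. t \<in> {0..T} \<Longrightarrow> e t \<le> 2 * \<delta> * exp (l * T)"
proof -
  define q where "q t = e t * exp (- (l * t))" for t
  have qc: "continuous_on {0..T} q" unfolding q_def by (intro continuous_intros ec)
  obtain ts where ts: "ts \<in> {0..T}" and tmax: "\<And>y. y \<in> {0..T} \<Longrightarrow> q y \<le> q ts"
    using continuous_attains_sup[OF compact_Icc _ qc] T by auto
  define S where "S = q ts"
  have S0: "S \<ge> 0" using e0[OF ts] by (simp add: S_def q_def)
  have eS: "e s \<le> S * exp (l * s)" if "s \<in> {0..T}" for s
  proof -
    have "q s \<le> S" using tmax[OF that] by (simp add: S_def)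
    then have "e s * exp (- (l * s)) * exp (l * s) \<le> S * exp (l * s)" unfolding q_def by (simp add: mult_right_mono)
    then show ?thesis by (simp add: exp_minus field_simps)
  qed
  have int_bound: "integral {0..t} (\<lambda>s. k s * e s) \<le> S * (exp (l * t) / 2)" if t: "t \<in> {0..T}" for t
  proof -
    have "integral {0..t} (\<lambda>s. k s * e s) \<le> integral {0..t} (\<lambda>s. S * (k s * exp (l * s)))"
    proof (rule integral_le)
      show "(\<lambda>s. k s * e s) integrable_on {0..t}"
        by (rule ai_cont_integrable[OF ai_sub[OF k]]) (use t continuous_on_subset[OF ec] in auto)
      have "(\<lambda>s. k s * exp (l * s)) integrable_on {0..t}"
        by (rule ai_cont_integrable[OF ai_sub[OF k]]) (use t in \<open>auto intro!: continuous_intros\<close>)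
      then show "(\<lambda>s. S * (k s * exp (l * s))) integrable_on {0..t}"
        using integrable_cmul[of _ _ S] by force
      fix s assume s: "s \<in> {0..t}"
      then have "e s \<le> S * exp (l * s)" using eS t by auto
      moreover have "k s \<ge> 0" using k0 s t by auto
      ultimately show "k s * e s \<le> S * (k s * exp (l * s))"
        using mult_left_mono[of "e s" "S * exp (l * s)" "k s"] by (simp add: algebra_simps)
    qed
    also have "\<dots> = S * integral {0..t} (\<lambda>s. k s * exp (l * s))" by simp
    also have "\<dots> \<le> S * (exp (l * t) / 2)" by (rule mult_left_mono[OF ker[OF t] S0])
    finally show ?thesis .
  qed
  have "e ts \<le> \<delta> + S * (exp (l * ts) / 2)" using le[OF ts] int_bound[OF ts] by linarith
  then have "e ts * exp (- (l * ts)) \<le> (\<delta> + S * (exp (l * ts) / 2)) * exp (- (l * ts))"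
    by (simp add: mult_right_mono)
  then have "S \<le> \<delta> * exp (- (l * ts)) + S / 2"
    by (simp add: S_def q_def distrib_right exp_minus field_simps)
  moreover have "\<delta> * exp (- (l * ts)) \<le> max \<delta> 0"
  proof (cases "\<delta> \<ge> 0")
    case True
    have "exp (- (l * ts)) \<le> 1" using l ts by auto
    then show ?thesis using True by (simp add: mult_left_le)
  next
    case False then show ?thesis by (simp add: mult_nonpos_nonneg)
  qed
  ultimately have S2: "S \<le> 2 * max \<delta> 0" by linarith
  fix t assume t: "t \<in> {0..T}"
  have "e t \<le> S * exp (l * t)" by (rule eS[OF t])
  also have "\<dots> \<le> S * exp (l * T)" using t l S0 by (auto intro!: mult_left_mono mult_left_mono)
  finally have "e t \<le> S * exp (l * T)" .
  show "e t \<le> 2 * \<delta> * exp (l * T)"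
  proof (cases "\<delta> \<ge> 0")
    case True
    then have "S * exp (l * T) \<le> 2 * \<delta> * exp (l * T)" using S2 by simp
    then show ?thesis using \<open>e t \<le> S * exp (l * T)\<close> by linarith
  next
    case False
    then have "S \<le> 0" using S2 by simp
    have "e t \<le> \<delta> + integral {0..t} (\<lambda>s. k s * e s)" by (rule le[OF t])
    also have "integral {0..t} (\<lambda>s. k s * e s) \<le> S * (exp (l * t) / 2)" by (rule int_bound[OF t])
    finally have "e t \<le> \<delta> + S * (exp (l * t) / 2)" by simp
    moreover have "S * (exp (l * t) / 2) \<le> 0" using \<open>S \<le> 0\<close> by (simp add: mult_nonpos_nonneg)
    ultimately have "e t < 0" using False by linarith
    then show ?thesis using e0[OF t] by simp
  qed
qed



lemma pu_approx:
  fixes g :: "real \<Rightarrow> 'a::real_normed_vector"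
  assumes g: "continuous_on {a..b} g" and ab: "a < b" and e: "e > 0"
  shows "\<exists>(N::nat) c \<psi>. (\<forall>j. continuous_on {a..b} (\<psi> j)) \<and> (\<forall>j\<le>N. c j \<in> {a..b}) \<and>
            (\<forall>x\<in>{a..b}. norm (g x - (\<Sum>j\<le>N. \<psi> j x *\<^sub>R g (c j))) \<le> e)"
proof -
  have "uniformly_continuous_on {a..b} g" using g compact_uniformly_continuous by blast
  then obtain d where d: "d > 0" and dg: "\<And>x y. x \<in> {a..b} \<Longrightarrow> y \<in> {a..b} \<Longrightarrow> dist y x < d \<Longrightarrow> dist (g y) (g x) < e"
    using e unfolding uniformly_continuous_on_def by metis
  obtain N :: nat where N: "(b - a) / d < real N" using reals_Archimedean2 by blast
  have "0 < (b - a) / d" using ab d by simp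
  then have Npos: "N > 0" using N by (cases N) auto
  define h0 where "h0 = (b - a) / real N"
  have h0: "h0 > 0" using ab Npos by (simp add: h0_def)
  have h0d: "h0 < d" using N d Npos ab by (simp add: h0_def field_simps)
  have Nb: "a + real N * h0 = b" using Npos by (simp add: h0_def)
  define c where "c j = a + real j * h0" for j :: nat
  have cab: "c j \<in> {a..b}" if "j \<le> N" for j
  proof -
    have "real j * h0 \<le> real N * h0" using that h0 by (simp add: mult_right_mono)
    then show ?thesis using Nb h0 by (auto simp: c_def)
  qed
  define \<phi> where "\<phi> j x = max 0 (h0 - \<bar>x - c j\<bar>)" for j x
  define S where "S x = (\<Sum>k\<le>N. \<phi> k x)" for x
  have Spos: "S x > 0" if x: "x \<in> {a..b}" for x
  proof -
    define m where "m = nat \<lfloor>(x - a) / h0\<rfloor>"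
    have fl0: "0 \<le> \<lfloor>(x - a) / h0\<rfloor>" using x h0 by auto
    have fl1: "of_int \<lfloor>(x - a) / h0\<rfloor> \<le> (x - a) / h0" by (rule of_int_floor_le)
    have fl2: "(x - a) / h0 < of_int \<lfloor>(x - a) / h0\<rfloor> + 1" by (rule real_of_int_floor_add_one_gt)
    have rm: "real m = of_int \<lfloor>(x - a) / h0\<rfloor>" using fl0 by (simp add: m_def)
    have "h0 * real m \<le> h0 * ((x - a) / h0)" using mult_left_mono[OF fl1, of h0] h0 rm by simp
    then have l1: "real m * h0 \<le> x - a" using h0 by (simp add: mult.commute)
    have "h0 * ((x - a) / h0) < h0 * (real m + 1)" using mult_strict_left_mono[OF fl2 h0] rm by simp
    then have l2: "x - a < real m * h0 + h0" using h0 by (simp add: distrib_left mult.commute)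
    have "(x - a) / h0 \<le> real N" using x h0 Nb by (simp add: field_simps)
    then have "m \<le> N" using rm fl1 by (simp add: m_def nat_le_iff floor_le_iff)
    moreover have "\<phi> m x > 0" using l1 l2 by (simp add: \<phi>_def c_def)
    moreover have "\<phi> k x \<ge> 0" for k by (simp add: \<phi>_def)
    ultimately have "\<phi> m x \<le> S x" unfolding S_def by (intro member_le_sum) auto
    then show ?thesis using \<open>\<phi> m x > 0\<close> by linarith
  qed
  define \<psi> where "\<psi> j x = \<phi> j x / S x" for j x
  have \<psi>cont: "continuous_on {a..b} (\<psi> j)" for j
  proof -
    have c1: "continuous_on {a..b} (\<phi> j)" for j unfolding \<phi>_def by (intro continuous_intros)
    have c2: "continuous_on {a..b} S" unfolding S_def by (intro continuous_on_sum c1) 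
    have "\<forall>x\<in>{a..b}. S x \<noteq> 0" using Spos by fastforce
    then show ?thesis unfolding \<psi>_def by (intro continuous_on_divide c1 c2)
  qed
  have \<psi>sum: "(\<Sum>j\<le>N. \<psi> j x) = 1" if "x \<in> {a..b}" for x
    using Spos[OF that] by (simp add: \<psi>_def sum_divide_distrib[symmetric] S_def)
  have \<psi>nn: "\<psi> j x \<ge> 0" if "x \<in> {a..b}" for j x
    using Spos[OF that] by (simp add: \<psi>_def \<phi>_def)
  have \<psi>near: "norm (g x - g (c j)) \<le> e" if "x \<in> {a..b}" "j \<le> N" "\<psi> j x \<noteq> 0" for j x
  proof -
    have "\<phi> j x \<noteq> 0" using that(3) by (simp add: \<psi>_def)
    then have "\<bar>x - c j\<bar> < h0" by (simp add: \<phi>_def max_def split: if_splits)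
    then have "dist x (c j) < d" using h0d by (simp add: dist_real_def)
    then have "dist (g x) (g (c j)) < e" using dg[OF cab[OF that(2)] that(1)] by simp
    then show ?thesis by (simp add: dist_norm)
  qed
  show ?thesis
  proof (intro exI[of _ N] exI[of _ c] exI[of _ \<psi>] conjI allI ballI impI)
    show "continuous_on {a..b} (\<psi> j)" for j by (rule \<psi>cont)
    show "c j \<in> {a..b}" if "j \<le> N" for j using cab that by blast
    fix x assume x: "x \<in> {a..b}"
    have "g x - (\<Sum>j\<le>N. \<psi> j x *\<^sub>R g (c j)) = (\<Sum>j\<le>N. \<psi> j x *\<^sub>R (g x - g (c j)))"
      by (simp add: scaleR_diff_right sum_subtractf \<psi>sum[OF x] scaleR_sum_left[symmetric])
    also have "norm \<dots> \<le> (\<Sum>j\<le>N. norm (\<psi> j x *\<^sub>R (g x - g (c j))))" by (rule norm_sum)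
    also have "\<dots> \<le> (\<Sum>j\<le>N. \<psi> j x * e)"
    proof (rule sum_mono)
      fix j assume j: "j \<in> {..N}"
      show "norm (\<psi> j x *\<^sub>R (g x - g (c j))) \<le> \<psi> j x * e"
      proof (cases "\<psi> j x = 0")
        case True then show ?thesis by simp
      next
        case False
        then show ?thesis using \<psi>near[OF x _ False] j \<psi>nn[OF x, of j]
          by (simp add: mult_left_mono)
      qed
    qed
    also have "\<dots> = e" using \<psi>sum[OF x] by (simp add: sum_distrib_right[symmetric])
    finally show "norm (g x - (\<Sum>j\<le>N. \<psi> j x *\<^sub>R g (c j))) \<le> e" .
  qed
qed

lemma cont_bound:
  fixes g :: "real \<Rightarrow> 'a::real_normed_vector"
  assumes "continuous_on {a..b} g"
  obtains K where "K \<ge> 0" "\<And>x. x \<in> {a..b} \<Longrightarrow> norm (g x) \<le> K"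
proof -
  have "compact (g ` {a..b})" by (rule compact_continuous_image[OF assms compact_Icc])
  then obtain K0 where "\<forall>y\<in>g ` {a..b}. norm y \<le> K0" using compact_imp_bounded bounded_iff by metis
  then show ?thesis using that[of "max K0 0"] by force
qed

lemma weak_unif:
  fixes \<gamma> :: "nat \<Rightarrow> real \<Rightarrow> real" and \<gamma>b \<psi> :: "real \<Rightarrow> real"
  assumes T: "0 \<le> T" and ai: "\<And>n. \<gamma> n absolutely_integrable_on {0..T}"
    and aib: "\<gamma>b absolutely_integrable_on {0..T}" and \<psi>: "continuous_on {0..T} \<psi>"
    and dom: "\<And>n a b. 0 \<le> a \<Longrightarrow> a \<le> b \<Longrightarrow> b \<le> T \<Longrightarrow> integral {a..b} (\<lambda>s. \<bar>\<gamma> n s\<bar>) \<le> integral {a..b} \<gamma>b"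
    and pw: "\<And>t. t \<in> {0..T} \<Longrightarrow> (\<lambda>n. integral {0..t} (\<lambda>s. \<gamma> n s * \<psi> s)) \<longlonglongrightarrow> integral {0..t} \<psi>"
    and e: "\<epsilon> > 0"
  shows "eventually (\<lambda>n. \<forall>t\<in>{0..T}. \<bar>integral {0..t} (\<lambda>s. \<gamma> n s * \<psi> s) - integral {0..t} \<psi>\<bar> \<le> \<epsilon>) sequentially"
proof -
  obtain K where K: "K \<ge> 0" and Kb: "\<And>x. x \<in> {0..T} \<Longrightarrow> norm (\<psi> x) \<le> K" using cont_bound[OF \<psi>] by metis
  define Gb where "Gb t = integral {0..t} \<gamma>b" for t
  define P where "P t = integral {0..t} \<psi>" for t
  define F where "F n t = integral {0..t} (\<lambda>s. \<gamma> n s * \<psi> s)" for n t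
  have bi: "\<gamma>b integrable_on {0..T}" by (rule ai_integrable[OF aib])
  have \<psi>i: "\<psi> integrable_on {0..T}" by (rule integrable_continuous_interval[OF \<psi>])
  have Gbc: "continuous_on {0..T} Gb" unfolding Gb_def by (rule indefinite_integral_continuous_1[OF bi])
  have Pc: "continuous_on {0..T} P" unfolding P_def by (rule indefinite_integral_continuous_1[OF \<psi>i])
  have e3: "\<epsilon> / (3 * (K + 1)) > 0" "\<epsilon> / 3 > 0" using e K by auto
  obtain d1 where d1: "d1 > 0" and dG: "\<And>x y. x \<in> {0..T} \<Longrightarrow> y \<in> {0..T} \<Longrightarrow> dist y x < d1 \<Longrightarrow> dist (Gb y) (Gb x) < \<epsilon> / (3 * (K + 1))"
    using Gbc compact_uniformly_continuous[OF Gbc compact_Icc] e3(1) unfolding uniformly_continuous_on_def by metis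
  obtain d2 where d2: "d2 > 0" and dP: "\<And>x y. x \<in> {0..T} \<Longrightarrow> y \<in> {0..T} \<Longrightarrow> dist y x < d2 \<Longrightarrow> dist (P y) (P x) < \<epsilon> / 3"
    using Pc compact_uniformly_continuous[OF Pc compact_Icc] e3(2) unfolding uniformly_continuous_on_def by metis
  define d where "d = min d1 d2"
  have d: "d > 0" using d1 d2 by (simp add: d_def)
  have A: "\<bar>F n y - F n x\<bar> \<le> K * (Gb y - Gb x)" if xy: "0 \<le> x" "x \<le> y" "y \<le> T" for n x y
  proof -
    have gi: "(\<lambda>s. \<gamma> n s * \<psi> s) integrable_on {a..b}" if "0 \<le> a" "b \<le> T" for a b
      by (rule ai_cont_integrable[OF ai_sub[OF ai[of n]]]) (use that continuous_on_subset[OF \<psi>] in auto)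
    have "F n x + integral {x..y} (\<lambda>s. \<gamma> n s * \<psi> s) = F n y" unfolding F_def
      by (rule real_combine) (use xy gi in auto)
    then have "\<bar>F n y - F n x\<bar> = \<bar>integral {x..y} (\<lambda>s. \<gamma> n s * \<psi> s)\<bar>" by simp
    also have "\<dots> \<le> integral {x..y} (\<lambda>s. K * \<bar>\<gamma> n s\<bar>)"
    proof -
      have "norm (integral {x..y} (\<lambda>s. \<gamma> n s * \<psi> s)) \<le> integral {x..y} (\<lambda>s. K * \<bar>\<gamma> n s\<bar>)"
      proof (rule integral_norm_bound_integral)
        show "(\<lambda>s. \<gamma> n s * \<psi> s) integrable_on {x..y}" using gi xy by auto
        show "(\<lambda>s. K * \<bar>\<gamma> n s\<bar>) integrable_on {x..y}"
          using ai_integrable[OF ai_cmult[OF ai_abs[OF ai_sub[OF ai[of n]]]], of x y K] xy by auto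
        fix s assume s: "s \<in> {x..y}"
        then have "\<bar>\<psi> s\<bar> \<le> K" using Kb xy by auto
        then show "norm (\<gamma> n s * \<psi> s) \<le> K * \<bar>\<gamma> n s\<bar>"
          using mult_right_mono[of "\<bar>\<psi> s\<bar>" K "\<bar>\<gamma> n s\<bar>"] by (simp add: abs_mult mult.commute)
      qed
      then show ?thesis by simp
    qed
    also have "\<dots> = K * integral {x..y} (\<lambda>s. \<bar>\<gamma> n s\<bar>)" by simp
    also have "\<dots> \<le> K * integral {x..y} \<gamma>b" using dom[OF xy] K by (simp add: mult_left_mono)
    also have "integral {x..y} \<gamma>b = Gb y - Gb x"
    proof -
      have "Gb x + integral {x..y} \<gamma>b = Gb y" unfolding Gb_def
        by (rule real_combine) (use xy integrable_on_subinterval[OF bi] in auto)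
      then show ?thesis by simp
    qed
    finally show ?thesis .
  qed
  have A2: "\<bar>F n y - F n x\<bar> \<le> K * \<bar>Gb y - Gb x\<bar>" if "x \<in> {0..T}" "y \<in> {0..T}" for n x y
  proof (cases "x \<le> y")
    case True
    then show ?thesis using A[of x y n] that K by (smt (verit, best) atLeastAtMost_iff mult_left_mono)
  next
    case False
    then show ?thesis using A[of y x n] that K by (smt (verit, best) atLeastAtMost_iff mult_left_mono)
  qed
  have cov: "{0..T} \<subseteq> (\<Union>p\<in>{0..T}. ball p d)" using d by auto
  obtain C where C: "C \<subseteq> {0..T}" "finite C" and Ccov: "{0..T} \<subseteq> (\<Union>p\<in>C. ball p d)"
    using compactE_image[OF compact_Icc _ cov] by blast
  have "\<forall>p\<in>C. eventually (\<lambda>n. \<bar>F n p - P p\<bar> < \<epsilon> / 3) sequentially"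
  proof
    fix p assume "p \<in> C"
    then have "(\<lambda>n. F n p) \<longlonglongrightarrow> P p" using pw C unfolding F_def P_def by auto
    from tendstoD[OF this e3(2)] show "eventually (\<lambda>n. \<bar>F n p - P p\<bar> < \<epsilon> / 3) sequentially"
      by (simp add: dist_real_def)
  qed
  then have ev: "eventually (\<lambda>n. \<forall>p\<in>C. \<bar>F n p - P p\<bar> < \<epsilon> / 3) sequentially"
    by (rule eventually_ball_finite[OF C(2)])
  show ?thesis
  proof (rule eventually_mono[OF ev], intro ballI)
    fix n t assume H: "\<forall>p\<in>C. \<bar>F n p - P p\<bar> < \<epsilon> / 3" and t: "t \<in> {0..T}"
    obtain p where p: "p \<in> C" "t \<in> ball p d" using Ccov t by auto
    have pT: "p \<in> {0..T}" using p C by auto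
    have dtp: "dist t p < d1" "dist t p < d2" using p by (auto simp: d_def dist_commute)
    have "\<bar>F n t - F n p\<bar> \<le> K * \<bar>Gb t - Gb p\<bar>" by (rule A2[OF pT t])
    also have "\<bar>Gb t - Gb p\<bar> < \<epsilon> / (3 * (K + 1))" using dG[OF pT t dtp(1)] by (simp add: dist_real_def)
    then have "K * \<bar>Gb t - Gb p\<bar> \<le> K * (\<epsilon> / (3 * (K + 1)))" using K by (intro mult_left_mono) auto
    also have "\<dots> \<le> \<epsilon> / 3" using K e by (simp add: field_simps)
    finally have 1: "\<bar>F n t - F n p\<bar> \<le> \<epsilon> / 3" .
    have 2: "\<bar>P t - P p\<bar> < \<epsilon> / 3" using dP[OF pT t dtp(2)] by (simp add: dist_real_def)
    have 3: "\<bar>F n p - P p\<bar> < \<epsilon> / 3" using H p by auto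
    have "\<bar>F n t - P t\<bar> \<le> \<epsilon>" using 1 2 3 by linarith
    then show "\<bar>integral {0..t} (\<lambda>s. \<gamma> n s * \<psi> s) - integral {0..t} \<psi>\<bar> \<le> \<epsilon>"
      by (simp add: F_def P_def)
  qed
qed



lemma int_scaleR_left:
  assumes "f integrable_on S" shows "integral S (\<lambda>x. f x *\<^sub>R c) = integral S f *\<^sub>R c"
  using has_integral_scaleR_left[OF integrable_integral[OF assms]] by (rule integral_unique)

lemma weak_vec:
  fixes \<gamma> :: "nat \<Rightarrow> real \<Rightarrow> real" and \<gamma>b :: "real \<Rightarrow> real" and g :: "real \<Rightarrow> 'a::{real_inner,complete_space}"
  assumes T: "0 < T" and ai: "\<And>n. \<gamma> n absolutely_integrable_on {0..T}"
    and aib: "\<gamma>b absolutely_integrable_on {0..T}" and \<gamma>b0: "\<And>s. 0 \<le> \<gamma>b s"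
    and dom: "\<And>n a b. 0 \<le> a \<Longrightarrow> a \<le> b \<Longrightarrow> b \<le> T \<Longrightarrow> integral {a..b} (\<lambda>s. \<bar>\<gamma> n s\<bar>) \<le> integral {a..b} \<gamma>b"
    and pw: "\<And>\<psi> t. continuous_on {0..T} \<psi> \<Longrightarrow> t \<in> {0..T} \<Longrightarrow>
               (\<lambda>n. integral {0..t} (\<lambda>s. \<gamma> n s * \<psi> s)) \<longlonglongrightarrow> integral {0..t} \<psi>"
    and g: "continuous_on {0..T} g" and e: "\<epsilon> > 0"
  shows "eventually (\<lambda>n. \<forall>t\<in>{0..T}. norm (integral {0..t} (\<lambda>s. (1 - \<gamma> n s) *\<^sub>R g s)) \<le> \<epsilon>) sequentially"
proof -
  define B where "B = integral {0..T} (\<lambda>s. 1 + \<gamma>b s)"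
  have ai1b: "(\<lambda>s. 1 + \<gamma>b s) absolutely_integrable_on {0..T}" by (rule ai_add[OF ai_const aib])
  have B0: "B \<ge> 0" unfolding B_def
    by (rule integral_nonneg[OF ai_integrable[OF ai1b]]) (simp add: add_nonneg_nonneg \<gamma>b0)
  define e' where "e' = \<epsilon> / (2 * (B + 1))"
  have e': "e' > 0" using e B0 by (simp add: e'_def)
  obtain N :: nat and c \<psi> where \<psi>c: "\<And>j. continuous_on {0..T} (\<psi> j)" and cT: "\<And>j. j \<le> N \<Longrightarrow> c j \<in> {0..T}"
    and app: "\<And>x. x \<in> {0..T} \<Longrightarrow> norm (g x - (\<Sum>j\<le>N. \<psi> j x *\<^sub>R g (c j))) \<le> e'"
    using pu_approx[OF g T e'] by blast
  obtain Kg where Kg: "Kg \<ge> 0" and Kgb: "\<And>x. x \<in> {0..T} \<Longrightarrow> norm (g x) \<le> Kg" using cont_bound[OF g] by metis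
  define ej where "ej = \<epsilon> / (2 * (real N + 1) * (Kg + 1))"
  have ej: "ej > 0" using e Kg by (simp add: ej_def)
  have "\<forall>j\<in>{..N}. eventually (\<lambda>n. \<forall>t\<in>{0..T}. \<bar>integral {0..t} (\<lambda>s. \<gamma> n s * \<psi> j s) - integral {0..t} (\<psi> j)\<bar> \<le> ej) sequentially"
  proof
    fix j assume "j \<in> {..N}"
    show "eventually (\<lambda>n. \<forall>t\<in>{0..T}. \<bar>integral {0..t} (\<lambda>s. \<gamma> n s * \<psi> j s) - integral {0..t} (\<psi> j)\<bar> \<le> ej) sequentially"
      by (rule weak_unif[OF _ ai aib \<psi>c dom pw[OF \<psi>c] ej]) (use T in auto)
  qed
  then have ev: "eventually (\<lambda>n. \<forall>j\<in>{..N}. \<forall>t\<in>{0..T}. \<bar>integral {0..t} (\<lambda>s. \<gamma> n s * \<psi> j s) - integral {0..t} (\<psi> j)\<bar> \<le> ej) sequentially"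
    by (rule eventually_ball_finite[rotated]) simp
  show ?thesis
  proof (rule eventually_mono[OF ev], intro ballI)
    fix n t
    assume H: "\<forall>j\<in>{..N}. \<forall>t\<in>{0..T}. \<bar>integral {0..t} (\<lambda>s. \<gamma> n s * \<psi> j s) - integral {0..t} (\<psi> j)\<bar> \<le> ej"
      and t: "t \<in> {0..T}"
    define gt where "gt s = (\<Sum>j\<le>N. \<psi> j s *\<^sub>R g (c j))" for s
    have sub: "{0..t} \<subseteq> {0..T}" using t by auto
    have ait: "(\<lambda>s. 1 - \<gamma> n s) absolutely_integrable_on {0..t}"
      by (rule ai_sub[OF ai_diff[OF ai_const ai]]) (use sub in auto)
    have gtc: "continuous_on {0..t} gt" unfolding gt_def
      by (intro continuous_intros continuous_on_subset[OF \<psi>c sub])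
    have gct: "continuous_on {0..t} g" by (rule continuous_on_subset[OF g sub])
    have i1: "(\<lambda>s. (1 - \<gamma> n s) *\<^sub>R (g s - gt s)) integrable_on {0..t}"
      by (rule integrable_scaleR_cont[OF ait]) (intro continuous_intros gct gtc)
    have ij: "(\<lambda>s. (1 - \<gamma> n s) * \<psi> j s) integrable_on {0..t}" for j
      by (rule ai_cont_integrable[OF ait continuous_on_subset[OF \<psi>c sub]])
    have i2: "(\<lambda>s. ((1 - \<gamma> n s) * \<psi> j s) *\<^sub>R g (c j)) integrable_on {0..t}" for j
      by (rule integrable_on_scaleR_left[OF ij])
    have split: "integral {0..t} (\<lambda>s. (1 - \<gamma> n s) *\<^sub>R g s)
        = integral {0..t} (\<lambda>s. (1 - \<gamma> n s) *\<^sub>R (g s - gt s))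
          + (\<Sum>j\<le>N. integral {0..t} (\<lambda>s. (1 - \<gamma> n s) * \<psi> j s) *\<^sub>R g (c j))"
    proof -
      have "(\<lambda>s. (1 - \<gamma> n s) *\<^sub>R g s) = (\<lambda>s. (1 - \<gamma> n s) *\<^sub>R (g s - gt s) + (\<Sum>j\<le>N. ((1 - \<gamma> n s) * \<psi> j s) *\<^sub>R g (c j)))"
        by (rule ext) (simp add: gt_def scaleR_diff_right scaleR_sum_right)
      then have "integral {0..t} (\<lambda>s. (1 - \<gamma> n s) *\<^sub>R g s)
          = integral {0..t} (\<lambda>s. (1 - \<gamma> n s) *\<^sub>R (g s - gt s)) + integral {0..t} (\<lambda>s. \<Sum>j\<le>N. ((1 - \<gamma> n s) * \<psi> j s) *\<^sub>R g (c j))"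
        using i1 i2 by (simp add: integral_add integrable_sum)
      also have "integral {0..t} (\<lambda>s. \<Sum>j\<le>N. ((1 - \<gamma> n s) * \<psi> j s) *\<^sub>R g (c j))
          = (\<Sum>j\<le>N. integral {0..t} (\<lambda>s. ((1 - \<gamma> n s) * \<psi> j s) *\<^sub>R g (c j)))"
        using i2 by (simp add: integral_sum)
      also have "\<dots> = (\<Sum>j\<le>N. integral {0..t} (\<lambda>s. (1 - \<gamma> n s) * \<psi> j s) *\<^sub>R g (c j))"
        using ij by (simp add: int_scaleR_left)
      finally show ?thesis .
    qed
    have b1: "norm (integral {0..t} (\<lambda>s. (1 - \<gamma> n s) *\<^sub>R (g s - gt s))) \<le> \<epsilon> / 2"
    proof -
      have "norm (integral {0..t} (\<lambda>s. (1 - \<gamma> n s) *\<^sub>R (g s - gt s)))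
          \<le> integral {0..t} (\<lambda>s. \<bar>1 - \<gamma> n s\<bar> * norm (g s - gt s))"
        by (rule norm_int_scaleR_le[OF ait]) (intro continuous_intros gct gtc)
      also have "\<dots> \<le> integral {0..t} (\<lambda>s. e' * (1 + \<bar>\<gamma> n s\<bar>))"
      proof (rule integral_le)
        show "(\<lambda>s. \<bar>1 - \<gamma> n s\<bar> * norm (g s - gt s)) integrable_on {0..t}"
          by (rule ai_cont_integrable[OF ai_abs[OF ait]]) (intro continuous_intros gct gtc)
        show "(\<lambda>s. e' * (1 + \<bar>\<gamma> n s\<bar>)) integrable_on {0..t}"
          by (rule ai_integrable[OF ai_cmult[OF ai_add[OF ai_const ai_abs[OF ai_sub[OF ai sub]]]]])
        fix s assume s: "s \<in> {0..t}"
        have "norm (g s - gt s) \<le> e'" using app[of s] s sub by (auto simp: gt_def)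
        moreover have "\<bar>1 - \<gamma> n s\<bar> \<le> 1 + \<bar>\<gamma> n s\<bar>" by linarith
        ultimately show "\<bar>1 - \<gamma> n s\<bar> * norm (g s - gt s) \<le> e' * (1 + \<bar>\<gamma> n s\<bar>)"
          using e' by (smt (verit) abs_ge_zero mult_mono mult.commute norm_ge_zero)
      qed
      also have "\<dots> = e' * integral {0..t} (\<lambda>s. 1 + \<bar>\<gamma> n s\<bar>)" by simp
      also have "integral {0..t} (\<lambda>s. 1 + \<bar>\<gamma> n s\<bar>) \<le> integral {0..t} (\<lambda>s. 1 + \<gamma>b s)"
      proof -
        have "integral {0..t} (\<lambda>s. 1 + \<bar>\<gamma> n s\<bar>) = integral {0..t} (\<lambda>s. 1) + integral {0..t} (\<lambda>s. \<bar>\<gamma> n s\<bar>)"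
          by (rule integral_add) (auto intro: ai_integrable[OF ai_abs[OF ai_sub[OF ai sub]]])
        also have "\<dots> \<le> integral {0..t} (\<lambda>s. 1) + integral {0..t} \<gamma>b" using dom[of 0 t n] t by auto
        also have "\<dots> = integral {0..t} (\<lambda>s. 1 + \<gamma>b s)"
          by (rule integral_add[symmetric]) (auto intro: ai_integrable[OF ai_sub[OF aib sub]])
        finally show ?thesis .
      qed
      also have "integral {0..t} (\<lambda>s. 1 + \<gamma>b s) \<le> B" unfolding B_def
        by (rule integral_subset_le[OF sub ai_integrable[OF ai_sub[OF ai1b sub]] ai_integrable[OF ai1b]])
           (simp add: add_nonneg_nonneg \<gamma>b0)
      finally have "norm (integral {0..t} (\<lambda>s. (1 - \<gamma> n s) *\<^sub>R (g s - gt s))) \<le> e' * B"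
        using e' by (simp add: mult_left_mono)
      also have "e' * B \<le> \<epsilon> / 2" using e B0 by (simp add: e'_def field_simps)
      finally show ?thesis .
    qed
    have b2: "norm (\<Sum>j\<le>N. integral {0..t} (\<lambda>s. (1 - \<gamma> n s) * \<psi> j s) *\<^sub>R g (c j)) \<le> \<epsilon> / 2"
    proof -
      have "norm (\<Sum>j\<le>N. integral {0..t} (\<lambda>s. (1 - \<gamma> n s) * \<psi> j s) *\<^sub>R g (c j))
         \<le> (\<Sum>j\<le>N. norm (integral {0..t} (\<lambda>s. (1 - \<gamma> n s) * \<psi> j s) *\<^sub>R g (c j)))" by (rule norm_sum)
      also have "\<dots> \<le> (\<Sum>j\<le>N. ej * Kg)"
      proof (rule sum_mono)
        fix j assume j: "j \<in> {..N}"
        have "integral {0..t} (\<lambda>s. (1 - \<gamma> n s) * \<psi> j s) = integral {0..t} (\<psi> j) - integral {0..t} (\<lambda>s. \<gamma> n s * \<psi> j s)"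
        proof -
          have "(\<lambda>s. (1 - \<gamma> n s) * \<psi> j s) = (\<lambda>s. \<psi> j s - \<gamma> n s * \<psi> j s)" by (auto simp: algebra_simps)
          moreover have "(\<lambda>s. \<gamma> n s * \<psi> j s) integrable_on {0..t}"
            by (rule ai_cont_integrable[OF ai_sub[OF ai sub] continuous_on_subset[OF \<psi>c sub]])
          moreover have "\<psi> j integrable_on {0..t}" by (rule integrable_continuous_interval[OF continuous_on_subset[OF \<psi>c sub]])
          ultimately show ?thesis by (simp add: integral_diff)
        qed
        then have "\<bar>integral {0..t} (\<lambda>s. (1 - \<gamma> n s) * \<psi> j s)\<bar> \<le> ej" using H j t by (simp add: abs_minus_commute)
        moreover have "norm (g (c j)) \<le> Kg" using Kgb cT j by auto
        ultimately show "norm (integral {0..t} (\<lambda>s. (1 - \<gamma> n s) * \<psi> j s) *\<^sub>R g (c j)) \<le> ej * Kg"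
          by (simp add: mult_mono' ej less_imp_le)
      qed
      also have "\<dots> = (real N + 1) * ej * Kg" by simp
      also have "\<dots> \<le> \<epsilon> / 2"
      proof -
        have "(real N + 1) * ej = \<epsilon> / (2 * (Kg + 1))"
          unfolding ej_def by (simp add: divide_simps) (simp add: algebra_simps)
        then have "(real N + 1) * ej * Kg = \<epsilon> / 2 * (Kg / (Kg + 1))" by simp
        also have "\<dots> \<le> \<epsilon> / 2" by (rule mult_left_le) (use e Kg in auto)
        finally show ?thesis .
      qed
      finally show ?thesis .
    qed
    show "norm (integral {0..t} (\<lambda>s. (1 - \<gamma> n s) *\<^sub>R g s)) \<le> \<epsilon>"
      unfolding split using b1 b2 norm_triangle_ineq[of "integral {0..t} (\<lambda>s. (1 - \<gamma> n s) *\<^sub>R (g s - gt s))"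
          "\<Sum>j\<le>N. integral {0..t} (\<lambda>s. (1 - \<gamma> n s) * \<psi> j s) *\<^sub>R g (c j)"] by linarith
  qed
qed



lemma fixed_point_exp:
  fixes \<Gamma> :: "(real \<Rightarrow> 'a::{real_normed_vector,complete_space}) \<Rightarrow> real \<Rightarrow> 'a" and k :: "real \<Rightarrow> real"
  assumes T: "0 \<le> T" and k: "k absolutely_integrable_on {0..T}" and k0: "\<And>s. s \<in> {0..T} \<Longrightarrow> 0 \<le> k s"
    and l: "l \<ge> 0" and ker: "\<And>t. t \<in> {0..T} \<Longrightarrow> integral {0..t} (\<lambda>s. k s * exp (l * s)) \<le> exp (l * t) / 2"
    and cont: "\<And>w. continuous_on {0..T} w \<Longrightarrow> continuous_on {0..T} (\<Gamma> w)"
    and contr: "\<And>w v t. continuous_on {0..T} w \<Longrightarrow> continuous_on {0..T} v \<Longrightarrow> t \<in> {0..T} \<Longrightarrow>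
                   norm (\<Gamma> w t - \<Gamma> v t) \<le> integral {0..t} (\<lambda>s. k s * norm (w s - v s))"
  shows "\<exists>w. continuous_on {0..T} w \<and> (\<forall>t\<in>{0..T}. \<Gamma> w t = w t)"
proof -
  define ws where "ws m = (\<Gamma> ^^ m) (\<lambda>_. 0)" for m
  have ws_Suc: "ws (Suc m) = \<Gamma> (ws m)" for m by (simp add: ws_def)
  have wsc: "continuous_on {0..T} (ws m)" for m
    by (induction m) (auto simp: ws_def intro: cont)
  obtain C where C: "C \<ge> 0" and Cb: "\<And>t. t \<in> {0..T} \<Longrightarrow> norm (ws 1 t - ws 0 t) \<le> C"
    using cont_bound[of 0 T "\<lambda>t. ws 1 t - ws 0 t"] wsc by (metis continuous_on_diff)
  have intk: "(\<lambda>s. k s * f s) integrable_on {0..t}" if "continuous_on {0..T} f" "t \<in> {0..T}" for f t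
    by (rule ai_cont_integrable[OF ai_sub[OF k]], use that in simp, rule continuous_on_subset[OF that(1)]) (use that in auto)
  have step: "norm (ws (Suc m) t - ws m t) \<le> C * (1/2)^m * exp (l * t)" if "t \<in> {0..T}" for m t
    using that
  proof (induction m arbitrary: t)
    case 0
    have "C \<le> C * exp (l * t)" using C l 0 by (simp add: mult_le_cancel_left1)
    then show ?case using Cb[OF 0] by simp
  next
    case (Suc m)
    have "norm (ws (Suc (Suc m)) t - ws (Suc m) t) \<le> integral {0..t} (\<lambda>s. k s * norm (ws (Suc m) s - ws m s))"
      using contr[OF wsc[of "Suc m"] wsc[of m] Suc.prems] by (simp only: ws_Suc)
    also have "\<dots> \<le> integral {0..t} (\<lambda>s. (C * (1/2)^m) * (k s * exp (l * s)))"
    proof (rule integral_le)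
      show "(\<lambda>s. k s * norm (ws (Suc m) s - ws m s)) integrable_on {0..t}"
        by (rule intk) (use Suc.prems in \<open>auto intro!: continuous_intros wsc\<close>)
      show "(\<lambda>s. (C * (1/2)^m) * (k s * exp (l * s))) integrable_on {0..t}"
        using intk[of "\<lambda>s. exp (l * s)" t] Suc.prems integrable_cmul[of _ _ "C * (1/2)^m"]
        by (force intro!: continuous_intros)
      fix s assume s: "s \<in> {0..t}"
      then have "norm (ws (Suc m) s - ws m s) \<le> C * (1/2)^m * exp (l * s)" using Suc by auto
      moreover have "k s \<ge> 0" using k0 s Suc.prems by auto
      ultimately show "k s * norm (ws (Suc m) s - ws m s) \<le> (C * (1/2)^m) * (k s * exp (l * s))"
        using mult_left_mono[of "norm (ws (Suc m) s - ws m s)" "C * (1/2)^m * exp (l * s)" "k s"]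
        by (simp add: algebra_simps)
    qed
    also have "\<dots> = (C * (1/2)^m) * integral {0..t} (\<lambda>s. k s * exp (l * s))" by simp
    also have "\<dots> \<le> (C * (1/2)^m) * (exp (l * t) / 2)" using ker[OF Suc.prems] C by (intro mult_left_mono) auto
    also have "\<dots> = C * (1/2)^(Suc m) * exp (l * t)" by simp
    finally show ?case .
  qed
  define E where "E = exp (l * T)"
  have step2: "norm (ws (Suc m) t - ws m t) \<le> C * E * (1/2)^m" if "t \<in> {0..T}" for m t
  proof -
    have "exp (l * t) \<le> E" using that l by (auto simp: E_def intro: mult_left_mono)
    then have "C * (1/2)^m * exp (l * t) \<le> C * (1/2)^m * E" using C by (intro mult_left_mono) auto
    then show ?thesis using step[OF that, of m] by (simp add: algebra_simps)
  qed
  have E0: "E \<ge> 0" by (simp add: E_def)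
  have tele: "norm (ws p t - ws m t) \<le> 2 * C * E * ((1/2)^m - (1/2)^p)" if "m \<le> p" "t \<in> {0..T}" for m p t
    using that(1)
  proof (induction p rule: dec_induct)
    case base then show ?case by simp
  next
    case (step p)
    have "norm (ws (Suc p) t - ws m t) \<le> norm (ws (Suc p) t - ws p t) + norm (ws p t - ws m t)"
      by (rule norm_diff_triangle_le[of _ "ws p t"]) auto
    also have "\<dots> \<le> C * E * (1/2)^p + 2 * C * E * ((1/2)^m - (1/2)^p)"
      using step2[OF that(2), of p] step.IH by linarith
    also have "\<dots> = 2 * C * E * ((1/2)^m - (1/2)^(Suc p))" by (simp add: algebra_simps)
    finally show ?case .
  qed
  have tele2: "dist (ws m t) (ws p t) \<le> 2 * C * E * (1/2)^(min m p)" if "t \<in> {0..T}" for m p t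
  proof (cases "m \<le> p")
    case True
    have "0 \<le> 2 * C * E * (1/2)^p" using C E0 by simp
    moreover have "norm (ws p t - ws m t) \<le> 2 * C * E * ((1/2)^m - (1/2)^p)" by (rule tele[OF True that])
    moreover have "2 * C * E * ((1/2)^m - (1/2)^p) = 2 * C * E * (1/2)^m - 2 * C * E * (1/2)^p"
      by (simp add: right_diff_distrib)
    ultimately have "norm (ws p t - ws m t) \<le> 2 * C * E * (1/2)^m" by linarith
    then show ?thesis using True by (simp add: dist_norm norm_minus_commute min_def)
  next
    case False
    then have pm: "p \<le> m" by simp
    have "0 \<le> 2 * C * E * (1/2)^m" using C E0 by simp
    moreover have "norm (ws m t - ws p t) \<le> 2 * C * E * ((1/2)^p - (1/2)^m)" by (rule tele[OF pm that])
    moreover have "2 * C * E * ((1/2)^p - (1/2)^m) = 2 * C * E * (1/2)^p - 2 * C * E * (1/2)^m"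
      by (simp add: right_diff_distrib)
    ultimately have "norm (ws m t - ws p t) \<le> 2 * C * E * (1/2)^p" by linarith
    moreover have "min m p = p" using pm by simp
    ultimately show ?thesis by (simp add: dist_norm)
  qed
  have CE: "0 \<le> 2 * C * E" using C E0 by simp
  have "uniformly_Cauchy_on {0..T} ws"
  proof (rule uniformly_Cauchy_onI)
    fix e :: real assume e: "e > 0"
    obtain m0 where m0: "(1/2::real)^m0 < e / (2 * C * E + 1)"
      using real_arch_pow_inv[of "e / (2 * C * E + 1)" "1/2"] e C E0 by (auto simp: add_nonneg_pos)
    show "\<exists>M. \<forall>x\<in>{0..T}. \<forall>m\<ge>M. \<forall>n\<ge>M. dist (ws m x) (ws n x) < e"
    proof (intro exI[of _ m0] ballI allI impI)
      fix x m n assume x: "x \<in> {0..T}" and mn: "m0 \<le> m" "m0 \<le> n"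
      have "(1/2::real)^(min m n) \<le> (1/2)^m0" using mn by (intro power_decreasing) auto
      then have "2 * C * E * (1/2)^(min m n) \<le> 2 * C * E * (1/2)^m0" using C E0 by (intro mult_left_mono) auto
      also have "\<dots> \<le> (2 * C * E + 1) * (1/2)^m0" by (simp add: algebra_simps)
      also have "\<dots> < (2 * C * E + 1) * (e / (2 * C * E + 1))" using m0 CE by (intro mult_strict_left_mono) auto
      also have "\<dots> = e" using CE by (simp add: field_simps)
      finally show "dist (ws m x) (ws n x) < e" using tele2[OF x, of m n] by linarith
    qed
  qed
  then have "uniformly_convergent_on {0..T} ws" by (rule Cauchy_uniformly_convergent)
  then obtain w where wl: "uniform_limit {0..T} ws w sequentially" unfolding uniformly_convergent_on_def by blast
  have wc: "continuous_on {0..T} w"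
    by (rule uniform_limit_theorem[OF _ wl]) (simp_all add: wsc)
  show ?thesis
  proof (intro exI conjI ballI, fact wc)
    fix t assume t: "t \<in> {0..T}"
    have l1: "(\<lambda>m. ws (Suc m) t) \<longlonglongrightarrow> w t"
      using tendsto_uniform_limitI[OF wl t] by (rule LIMSEQ_Suc)
    define Kk where "Kk = integral {0..T} k"
    have Kk0: "Kk \<ge> 0" unfolding Kk_def by (rule integral_nonneg[OF ai_integrable[OF k]]) (use k0 in auto)
    have l2: "(\<lambda>m. ws (Suc m) t) \<longlonglongrightarrow> \<Gamma> w t"
    proof (rule tendstoI)
      fix e :: real assume e: "e > 0"
      have "e / (Kk + 1) > 0" using e Kk0 by simp
      then have ev: "eventually (\<lambda>m. \<forall>s\<in>{0..T}. dist (ws m s) (w s) < e / (Kk + 1)) sequentially"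
        using wl by (auto simp: uniform_limit_iff)
      show "eventually (\<lambda>m. dist (ws (Suc m) t) (\<Gamma> w t) < e) sequentially"
      proof (rule eventually_mono[OF ev])
        fix m assume H: "\<forall>s\<in>{0..T}. dist (ws m s) (w s) < e / (Kk + 1)"
        have "dist (ws (Suc m) t) (\<Gamma> w t) = norm (\<Gamma> w t - \<Gamma> (ws m) t)"
          by (simp add: ws_Suc dist_norm norm_minus_commute)
        also have "\<dots> \<le> integral {0..t} (\<lambda>s. k s * norm (w s - ws m s))" by (rule contr[OF wc wsc t])
        also have "\<dots> \<le> integral {0..t} (\<lambda>s. k s * (e / (Kk + 1)))"
        proof (rule integral_le)
          show "(\<lambda>s. k s * norm (w s - ws m s)) integrable_on {0..t}"
            by (rule intk) (use t in \<open>auto intro!: continuous_intros wc wsc\<close>)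
          show "(\<lambda>s. k s * (e / (Kk + 1))) integrable_on {0..t}"
            by (rule intk) (use t in auto)
          fix s assume s: "s \<in> {0..t}"
          then have "norm (w s - ws m s) \<le> e / (Kk + 1)" using H t by (auto simp: dist_norm norm_minus_commute less_imp_le)
          moreover have "k s \<ge> 0" using k0 s t by auto
          ultimately show "k s * norm (w s - ws m s) \<le> k s * (e / (Kk + 1))" by (rule mult_left_mono)
        qed
        also have "\<dots> = integral {0..t} k * (e / (Kk + 1))" by simp
        also have "integral {0..t} k \<le> Kk" unfolding Kk_def
          by (rule integral_subset_le) (use t k0 ai_integrable[OF k] ai_integrable[OF ai_sub[OF k, of 0 t]] in auto)
        then have "integral {0..t} k * (e / (Kk + 1)) \<le> Kk * (e / (Kk + 1))" using e Kk0 by (intro mult_right_mono) auto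
        also have "\<dots> < e" using e Kk0 by (simp add: field_simps)
        finally show "dist (ws (Suc m) t) (\<Gamma> w t) < e" .
      qed
    qed
    show "\<Gamma> w t = w t" using LIMSEQ_unique[OF l2 l1] .
  qed
qed



definition trunc :: "real \<Rightarrow> 'a::real_normed_vector \<Rightarrow> 'a" where
  "trunc R x = (if norm x \<le> R then x else (R / norm x) *\<^sub>R x)"

lemma trunc_norm: "R \<ge> 0 \<Longrightarrow> norm (trunc R x) \<le> R"
  by (auto simp: trunc_def)

lemma trunc_id: "norm x \<le> R \<Longrightarrow> trunc R x = x"
  by (simp add: trunc_def)

lemma trunc_out_norm:
  assumes "norm y > R" "R \<ge> 0"
  shows "norm (y - trunc R y) = norm y - R"
proof -
  have "y - trunc R y = (1 - R / norm y) *\<^sub>R y" using assms by (simp add: trunc_def scaleR_diff_left)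
  moreover have "R / norm y \<le> 1" using assms by (simp add: divide_le_eq_1)
  then have "0 \<le> 1 - R / norm y" by simp
  ultimately have "norm (y - trunc R y) = (1 - R / norm y) * norm y" by simp
  also have "\<dots> = norm y - R" using assms by (auto simp: field_simps)
  finally show ?thesis .
qed

lemma trunc_lip1:
  assumes R: "R \<ge> 0" and x: "norm x \<le> R" and y: "norm y > R"
  shows "norm (trunc R x - trunc R y) \<le> 2 * norm (x - y)"
proof -
  have "norm (trunc R x - trunc R y) = norm ((x - y) + (y - trunc R y))" using x by (simp add: trunc_id)
  also have "\<dots> \<le> norm (x - y) + norm (y - trunc R y)" by (rule norm_triangle_ineq)
  also have "norm (y - trunc R y) = norm y - R" by (rule trunc_out_norm[OF y R])
  also have "norm y - R \<le> norm y - norm x" using x by simp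
  also have "\<dots> \<le> norm (x - y)" by (metis norm_minus_commute norm_triangle_ineq2)
  finally show ?thesis by simp
qed

lemma trunc_lip:
  fixes x y :: "'a::real_normed_vector"
  assumes R: "R \<ge> 0"
  shows "norm (trunc R x - trunc R y) \<le> 2 * norm (x - y)"
proof (cases "norm x \<le> R")
  case xin: True
  show ?thesis
  proof (cases "norm y \<le> R")
    case True then show ?thesis using xin by (simp add: trunc_id)
  next
    case False then show ?thesis using trunc_lip1[OF R xin] by simp
  qed
next
  case xout: False
  show ?thesis
  proof (cases "norm y \<le> R")
    case True then show ?thesis using trunc_lip1[OF R True, of x] xout
      by (simp add: norm_minus_commute)
  next
    case yout: False
    have nx: "norm x > 0" "norm y > 0" using xout yout R by auto
    define a where "a = R / norm x"
    define b where "b = R / norm y"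
    have a: "0 \<le> a" "a \<le> 1" using xout R nx by (auto simp: a_def)
    have "trunc R x - trunc R y = a *\<^sub>R (x - y) + (a - b) *\<^sub>R y"
      using xout yout by (simp add: trunc_def a_def b_def algebra_simps)
    then have "norm (trunc R x - trunc R y) \<le> a * norm (x - y) + \<bar>a - b\<bar> * norm y"
      using norm_triangle_ineq[of "a *\<^sub>R (x - y)" "(a - b) *\<^sub>R y"] a by simp
    also have "\<bar>a - b\<bar> * norm y = a * \<bar>norm y - norm x\<bar>"
    proof -
      have "(a - b) * norm y = a * (norm y - norm x)"
        using nx by (simp add: a_def b_def field_simps)
      then have "\<bar>a - b\<bar> * norm y = \<bar>a * (norm y - norm x)\<bar>" using nx by (metis abs_mult abs_of_pos)
      then show ?thesis using a by (simp add: abs_mult)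
    qed
    also have "\<bar>norm y - norm x\<bar> \<le> norm (x - y)" by (metis abs_minus_commute norm_triangle_ineq3)
    then have "a * \<bar>norm y - norm x\<bar> \<le> a * norm (x - y)" using a by (simp add: mult_left_mono)
    then have "a * norm (x - y) + a * \<bar>norm y - norm x\<bar> \<le> 2 * a * norm (x - y)" by simp
    also have "\<dots> \<le> 2 * norm (x - y)" using a by (simp add: mult_left_le_one_le)
    finally show ?thesis by simp
  qed
qed

locale grp =
  fixes U :: "real \<Rightarrow> 'a::{real_inner,complete_space} \<Rightarrow> 'a"
  assumes U0: "U 0 = id" and Uadd: "\<And>s t. U (s + t) = U s \<circ> U t"
    and Ulin: "\<And>t. linear (U t)" and Unorm: "\<And>t x. norm (U t x) = norm x"
    and Ucont: "\<And>x. continuous_on UNIV (\<lambda>t. U t x)"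
begin

lemma Ubl: "bounded_linear (U t)"
  by (rule bounded_linear_intro[where K=1]) (auto simp: linear_add[OF Ulin] linear_scale[OF Ulin] Unorm)

lemma U_add: "U a (U b x) = U (a + b) x"
  by (simp add: Uadd)

lemma U_diff: "U t x - U t y = U t (x - y)"
  by (simp add: linear_diff[OF Ulin])

lemma U_scale: "U t (c *\<^sub>R x) = c *\<^sub>R U t x"
  by (simp add: linear_scale[OF Ulin])

lemma U_inv: "U (-a) (U a x) = x"
  by (simp add: U_add U0)

lemma U_split: "U (a - b) x = U a (U (-b) x)"
  by (simp add: U_add)

lemma U_comp:
  fixes r :: "'b::metric_space \<Rightarrow> real"
  assumes r: "continuous_on S r" and g: "continuous_on S g"
  shows "continuous_on S (\<lambda>s. U (r s) (g s))"
proof (rule continuous_on_iff[THEN iffD2], intro ballI allI impI)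
  fix x e assume x: "x \<in> S" and e: "(0::real) < e"
  have e2: "e / 2 > 0" using e by simp
  have c2: "continuous_on S (\<lambda>s. U (r s) (g x))"
    by (rule continuous_on_compose2[OF Ucont r]) auto
  obtain d1 where d1: "d1 > 0" and h1: "\<And>x'. x' \<in> S \<Longrightarrow> dist x' x < d1 \<Longrightarrow> dist (g x') (g x) < e / 2"
    using g x e2 unfolding continuous_on_iff by metis
  obtain d2 where d2: "d2 > 0" and h2: "\<And>x'. x' \<in> S \<Longrightarrow> dist x' x < d2 \<Longrightarrow> dist (U (r x') (g x)) (U (r x) (g x)) < e / 2"
    using c2 x e2 unfolding continuous_on_iff by metis
  show "\<exists>d>0. \<forall>x'\<in>S. dist x' x < d \<longrightarrow> dist (U (r x') (g x')) (U (r x) (g x)) < e"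
  proof (intro exI[of _ "min d1 d2"] conjI ballI impI)
    show "min d1 d2 > 0" using d1 d2 by simp
    fix x' assume x': "x' \<in> S" "dist x' x < min d1 d2"
    have "dist (U (r x') (g x')) (U (r x) (g x)) \<le> dist (U (r x') (g x')) (U (r x') (g x)) + dist (U (r x') (g x)) (U (r x) (g x))"
      by (rule dist_triangle)
    also have "dist (U (r x') (g x')) (U (r x') (g x)) = dist (g x') (g x)"
      by (simp add: dist_norm U_diff Unorm)
    finally show "dist (U (r x') (g x')) (U (r x) (g x)) < e" using h1[of x'] h2[of x'] x' by simp
  qed
qed

lemma U_small:
  fixes T :: real
  assumes b: "continuous_on {0..T} b" and e: "e > 0"
  shows "\<exists>\<rho>>0. \<forall>r s. \<bar>r\<bar> < \<rho> \<longrightarrow> s \<in> {0..T} \<longrightarrow> norm (U r (b s) - b s) < e"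
proof -
  define K where "K = {-1..1::real} \<times> {0..T}"
  define \<phi> where "\<phi> p = U (fst p) (b (snd p)) - b (snd p)" for p
  have "continuous_on K (\<lambda>p. U (fst p) (b (snd p)))"
    by (rule U_comp) (auto simp: K_def intro!: continuous_intros continuous_on_compose2[OF b])
  moreover have "continuous_on K (\<lambda>p. b (snd p))"
    by (auto simp: K_def intro!: continuous_intros continuous_on_compose2[OF b])
  ultimately have "continuous_on K \<phi>" unfolding \<phi>_def by (intro continuous_intros)
  moreover have "compact K" unfolding K_def by (intro compact_Times compact_Icc)
  ultimately have "uniformly_continuous_on K \<phi>" by (rule compact_uniformly_continuous)
  then obtain d where d: "d > 0" and hd: "\<And>x y. x \<in> K \<Longrightarrow> y \<in> K \<Longrightarrow> dist y x < d \<Longrightarrow> dist (\<phi> y) (\<phi> x) < e"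
    using e unfolding uniformly_continuous_on_def by metis
  show ?thesis
  proof (intro exI[of _ "min d 1"] conjI allI impI)
    show "min d 1 > 0" using d by simp
    fix r s assume r: "\<bar>r\<bar> < min d 1" and s: "s \<in> {0..T}"
    have in1: "(r, s) \<in> K" "(0, s) \<in> K" using r s by (auto simp: K_def)
    have "dist (r, s) (0, s) = \<bar>r\<bar>" by (simp add: dist_Pair_Pair dist_real_def)
    then have "dist (\<phi> (r, s)) (\<phi> (0, s)) < e" using hd[OF in1(2) in1(1)] r by simp
    moreover have "\<phi> (0, s) = 0" by (simp add: \<phi>_def U0)
    ultimately show "norm (U r (b s) - b s) < e" by (simp add: \<phi>_def dist_norm)
  qed
qed

lemma U_pull:
  assumes "f integrable_on S"
  shows "(\<lambda>s. U t (f s)) integrable_on S" "integral S (\<lambda>s. U t (f s)) = U t (integral S f)"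
  using integrable_linear[OF assms Ubl] integral_linear[OF assms Ubl] by (simp_all add: o_def)

end



definition Fa :: "(real \<Rightarrow> real) \<Rightarrow> real \<Rightarrow> real" where
  "Fa \<alpha> t = integral {0..t} \<alpha>"

lemma li_ai: "loc_integrable \<alpha> \<Longrightarrow> \<alpha> absolutely_integrable_on {a..b}"
  unfolding loc_integrable_def using lborel_to_HK(1) by blast

lemma li_LINT: "loc_integrable \<alpha> \<Longrightarrow> (LINT x:{a..b}|lborel. \<alpha> x) = integral {a..b} \<alpha>"
  unfolding loc_integrable_def using lborel_to_HK(2) by blast

lemma Fa_diff:
  assumes "loc_integrable \<alpha>" "0 \<le> s" "s \<le> t"
  shows "integral {s..t} \<alpha> = Fa \<alpha> t - Fa \<alpha> s"
proof -
  have "Fa \<alpha> s + integral {s..t} \<alpha> = Fa \<alpha> t" unfolding Fa_def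
    by (rule real_combine[OF ai_integrable[OF li_ai[OF assms(1)]]]) (use assms in auto)
  then show ?thesis by simp
qed

lemma Fa_cont: "loc_integrable \<alpha> \<Longrightarrow> continuous_on {0..T} (Fa \<alpha>)"
  unfolding Fa_def by (rule indefinite_integral_continuous_1[OF ai_integrable[OF li_ai]])

lemma Phi_n_eq:
  assumes "loc_integrable \<alpha>" "0 \<le> s" "s \<le> t"
  shows "Phi_n U \<alpha> t s = U (Fa \<alpha> t - Fa \<alpha> s)"
  unfolding Phi_n_def li_LINT[OF assms(1)] Fa_diff[OF assms] ..

definition Gam :: "('a::real_normed_vector \<Rightarrow> 'a) \<Rightarrow> (real \<Rightarrow> 'a \<Rightarrow> 'a) \<Rightarrow> (real \<Rightarrow> real) \<Rightarrow> (real \<Rightarrow> real) \<Rightarrow> ('a \<Rightarrow> 'a) \<Rightarrow> 'a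
   \<Rightarrow> (real \<Rightarrow> 'a) \<Rightarrow> real \<Rightarrow> 'a" where
  "Gam J U \<alpha> \<beta> N u0 w t = Phi_n U \<alpha> t 0 u0 - J (integral {0..t} (\<lambda>s. \<beta> s *\<^sub>R Phi_n U \<alpha> t s (N (w s))))"

context grp begin

lemma integ:
  assumes a: "loc_integrable \<alpha>" and b: "loc_integrable \<beta>" and h: "continuous_on {0..t} h"
  shows "(\<lambda>s. \<beta> s *\<^sub>R Phi_n U \<alpha> t s (h s)) integrable_on {0..t}"
proof (rule integrable_eq)
  show "(\<lambda>s. \<beta> s *\<^sub>R U (Fa \<alpha> t - Fa \<alpha> s) (h s)) integrable_on {0..t}"
    by (rule integrable_scaleR_cont[OF li_ai[OF b]], rule U_comp)
       (intro continuous_intros Fa_cont[OF a] h)+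
  fix x assume "x \<in> {0..t}"
  then have "Phi_n U \<alpha> t x = U (Fa \<alpha> t - Fa \<alpha> x)" by (intro Phi_n_eq[OF a]) auto
  then show "\<beta> x *\<^sub>R U (Fa \<alpha> t - Fa \<alpha> x) (h x) = \<beta> x *\<^sub>R Phi_n U \<alpha> t x (h x)" by simp
qed

lemma int_eq_pull:
  assumes a: "loc_integrable \<alpha>" and b: "loc_integrable \<beta>" and h: "continuous_on {0..t} h"
  shows "integral {0..t} (\<lambda>s. \<beta> s *\<^sub>R Phi_n U \<alpha> t s (h s))
        = U (Fa \<alpha> t) (integral {0..t} (\<lambda>s. \<beta> s *\<^sub>R U (- Fa \<alpha> s) (h s)))"
proof -
  have i: "(\<lambda>s. \<beta> s *\<^sub>R U (- Fa \<alpha> s) (h s)) integrable_on {0..t}"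
    by (rule integrable_scaleR_cont[OF li_ai[OF b]], rule U_comp)
       (intro continuous_intros Fa_cont[OF a] h)+
  have "integral {0..t} (\<lambda>s. \<beta> s *\<^sub>R Phi_n U \<alpha> t s (h s))
      = integral {0..t} (\<lambda>s. U (Fa \<alpha> t) (\<beta> s *\<^sub>R U (- Fa \<alpha> s) (h s)))"
  proof (rule integral_cong)
    fix x assume "x \<in> {0..t}"
    then have "Phi_n U \<alpha> t x = U (Fa \<alpha> t - Fa \<alpha> x)" by (intro Phi_n_eq[OF a]) auto
    then show "\<beta> x *\<^sub>R Phi_n U \<alpha> t x (h x) = U (Fa \<alpha> t) (\<beta> x *\<^sub>R U (- Fa \<alpha> x) (h x))"
      by (simp add: U_scale U_split)
  qed
  also have "\<dots> = U (Fa \<alpha> t) (integral {0..t} (\<lambda>s. \<beta> s *\<^sub>R U (- Fa \<alpha> s) (h s)))"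
    by (rule U_pull(2)[OF i])
  finally show ?thesis .
qed

lemma Gam_cont:
  assumes a: "loc_integrable \<alpha>" and b: "loc_integrable \<beta>" and h: "continuous_on {0..T} h"
    and J: "bounded_linear J"
  shows "continuous_on {0..T} (\<lambda>t. Phi_n U \<alpha> t 0 u0 - J (integral {0..t} (\<lambda>s. \<beta> s *\<^sub>R Phi_n U \<alpha> t s (h s))))"
proof -
  have c1: "continuous_on {0..T} (\<lambda>t. U (Fa \<alpha> t) u0)"
    by (rule U_comp) (intro continuous_intros Fa_cont[OF a])+
  have c2: "continuous_on {0..T} (\<lambda>t. U (Fa \<alpha> t) (integral {0..t} (\<lambda>s. \<beta> s *\<^sub>R U (- Fa \<alpha> s) (h s))))"
  proof (rule U_comp[OF Fa_cont[OF a]])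
    show "continuous_on {0..T} (\<lambda>t. integral {0..t} (\<lambda>s. \<beta> s *\<^sub>R U (- Fa \<alpha> s) (h s)))"
      by (rule indef_integral_cont[OF li_ai[OF b]], rule U_comp) (intro continuous_intros Fa_cont[OF a] h)+
  qed
  have "continuous_on {0..T} (\<lambda>t. U (Fa \<alpha> t) u0 - J (U (Fa \<alpha> t) (integral {0..t} (\<lambda>s. \<beta> s *\<^sub>R U (- Fa \<alpha> s) (h s)))))"
    by (intro continuous_intros c1 bounded_linear.continuous_on[OF J c2])
  then show ?thesis
  proof (rule continuous_on_eq)
    fix t assume t: "t \<in> {0..T}"
    have "Phi_n U \<alpha> t 0 = U (Fa \<alpha> t - Fa \<alpha> 0)" by (rule Phi_n_eq[OF a]) (use t in auto)
    then have "Phi_n U \<alpha> t 0 u0 = U (Fa \<alpha> t) u0" by (simp add: Fa_def)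
    moreover have "integral {0..t} (\<lambda>s. \<beta> s *\<^sub>R Phi_n U \<alpha> t s (h s))
        = U (Fa \<alpha> t) (integral {0..t} (\<lambda>s. \<beta> s *\<^sub>R U (- Fa \<alpha> s) (h s)))"
      by (rule int_eq_pull[OF a b continuous_on_subset[OF h]]) (use t in auto)
    ultimately show "U (Fa \<alpha> t) u0 - J (U (Fa \<alpha> t) (integral {0..t} (\<lambda>s. \<beta> s *\<^sub>R U (- Fa \<alpha> s) (h s))))
       = Phi_n U \<alpha> t 0 u0 - J (integral {0..t} (\<lambda>s. \<beta> s *\<^sub>R Phi_n U \<alpha> t s (h s)))" by simp
  qed
qed

lemma int_diff_bound:
  assumes a: "loc_integrable \<alpha>" and b: "loc_integrable \<beta>" and h1: "continuous_on {0..t} h1" and h2: "continuous_on {0..t} h2"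
  shows "norm (integral {0..t} (\<lambda>s. \<beta> s *\<^sub>R Phi_n U \<alpha> t s (h1 s)) - integral {0..t} (\<lambda>s. \<beta> s *\<^sub>R Phi_n U \<alpha> t s (h2 s)))
       \<le> integral {0..t} (\<lambda>s. \<bar>\<beta> s\<bar> * norm (h1 s - h2 s))"
proof -
  have "integral {0..t} (\<lambda>s. \<beta> s *\<^sub>R Phi_n U \<alpha> t s (h1 s)) - integral {0..t} (\<lambda>s. \<beta> s *\<^sub>R Phi_n U \<alpha> t s (h2 s))
      = integral {0..t} (\<lambda>s. \<beta> s *\<^sub>R Phi_n U \<alpha> t s (h1 s) - \<beta> s *\<^sub>R Phi_n U \<alpha> t s (h2 s))"
    by (rule integral_diff[symmetric, OF integ[OF a b h1] integ[OF a b h2]])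
  also have "\<dots> = integral {0..t} (\<lambda>s. \<beta> s *\<^sub>R U (Fa \<alpha> t - Fa \<alpha> s) (h1 s - h2 s))"
  proof (rule integral_cong)
    fix x assume "x \<in> {0..t}"
    then have "Phi_n U \<alpha> t x = U (Fa \<alpha> t - Fa \<alpha> x)" by (intro Phi_n_eq[OF a]) auto
    then show "\<beta> x *\<^sub>R Phi_n U \<alpha> t x (h1 x) - \<beta> x *\<^sub>R Phi_n U \<alpha> t x (h2 x) = \<beta> x *\<^sub>R U (Fa \<alpha> t - Fa \<alpha> x) (h1 x - h2 x)"
      by (simp add: U_diff scaleR_diff_right[symmetric])
  qed
  also have "norm \<dots> \<le> integral {0..t} (\<lambda>s. \<bar>\<beta> s\<bar> * norm (U (Fa \<alpha> t - Fa \<alpha> s) (h1 s - h2 s)))"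
    by (rule norm_int_scaleR_le[OF li_ai[OF b]], rule U_comp) (intro continuous_intros Fa_cont[OF a] h1 h2)+
  also have "\<dots> = integral {0..t} (\<lambda>s. \<bar>\<beta> s\<bar> * norm (h1 s - h2 s))"
    by (simp add: Unorm)
  finally show ?thesis .
qed

end



context grp begin

lemma J_diff_norm:
  assumes J: "bounded_linear J" and Jn: "\<And>x. norm (J x) = norm x"
  shows "norm ((c - J x) - (c - J y)) = norm (x - y)"
proof -
  have "(c - J x) - (c - J y) = J (y - x)" by (simp add: linear_diff[OF bounded_linear.linear[OF J]])
  then show ?thesis by (simp add: Jn norm_minus_commute)
qed

lemma exist_global:
  assumes a: "loc_integrable \<alpha>" and b: "loc_integrable \<beta>" and T: "0 \<le> T"
    and N: "\<And>x y. norm (N x - N y) \<le> Lc * norm (x - y)" and Lc: "Lc \<ge> 0"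
    and J: "bounded_linear J" and Jn: "\<And>x. norm (J x) = norm x"
  shows "\<exists>w. continuous_on {0..T} w \<and>
     (\<forall>t\<in>{0..T}. Phi_n U \<alpha> t 0 u0 - J (integral {0..t} (\<lambda>s. \<beta> s *\<^sub>R Phi_n U \<alpha> t s (N (w s)))) = w t)"
proof -
  have Nc: "continuous_on UNIV N"
    by (rule lipschitz_on_continuous_on[of Lc], rule lipschitz_onI) (use N Lc in \<open>auto simp: dist_norm\<close>)
  have Nw: "continuous_on S (\<lambda>s. N (w s))" if "continuous_on S w" for S and w :: "real \<Rightarrow> 'a"
    by (rule continuous_on_compose2[OF Nc that]) auto
  define k where "k s = Lc * \<bar>\<beta> s\<bar>" for s
  have k: "k absolutely_integrable_on {0..T}" unfolding k_def by (rule ai_cmult[OF ai_abs[OF li_ai[OF b]]])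
  have k0: "\<And>s. 0 \<le> k s" using Lc by (simp add: k_def)
  obtain l where l: "l \<ge> 0" and ker: "\<And>t. t \<in> {0..T} \<Longrightarrow> integral {0..t} (\<lambda>s. k s * exp (l * s)) \<le> 1/2 * exp (l * t)"
    using kernel_exp[OF k k0, of "1/2"] by auto
  show ?thesis
  proof (rule fixed_point_exp[OF T k k0 l])
    show "\<And>t. t \<in> {0..T} \<Longrightarrow> integral {0..t} (\<lambda>s. k s * exp (l * s)) \<le> exp (l * t) / 2" using ker by simp
    fix w :: "real \<Rightarrow> 'a" assume w: "continuous_on {0..T} w"
    show "continuous_on {0..T} (\<lambda>t. Phi_n U \<alpha> t 0 u0 - J (integral {0..t} (\<lambda>s. \<beta> s *\<^sub>R Phi_n U \<alpha> t s (N (w s)))))"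
      by (rule Gam_cont[OF a b Nw[OF w] J])
  next
    fix w v :: "real \<Rightarrow> 'a" and t assume w: "continuous_on {0..T} w" and v: "continuous_on {0..T} v" and t: "t \<in> {0..T}"
    have sub: "{0..t} \<subseteq> {0..T}" using t by auto
    have wt: "continuous_on {0..t} w" "continuous_on {0..t} v" using w v continuous_on_subset sub by blast+
    have "norm ((Phi_n U \<alpha> t 0 u0 - J (integral {0..t} (\<lambda>s. \<beta> s *\<^sub>R Phi_n U \<alpha> t s (N (w s)))))
             - (Phi_n U \<alpha> t 0 u0 - J (integral {0..t} (\<lambda>s. \<beta> s *\<^sub>R Phi_n U \<alpha> t s (N (v s))))))
        = norm (integral {0..t} (\<lambda>s. \<beta> s *\<^sub>R Phi_n U \<alpha> t s (N (w s)))
                 - integral {0..t} (\<lambda>s. \<beta> s *\<^sub>R Phi_n U \<alpha> t s (N (v s))))"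
      by (rule J_diff_norm[OF J Jn])
    also have "\<dots> \<le> integral {0..t} (\<lambda>s. \<bar>\<beta> s\<bar> * norm (N (w s) - N (v s)))"
      by (rule int_diff_bound[OF a b Nw[OF wt(1)] Nw[OF wt(2)]])
    also have "\<dots> \<le> integral {0..t} (\<lambda>s. k s * norm (w s - v s))"
    proof (rule integral_le)
      show "(\<lambda>s. \<bar>\<beta> s\<bar> * norm (N (w s) - N (v s))) integrable_on {0..t}"
        by (rule ai_cont_integrable[OF ai_abs[OF li_ai[OF b]]]) (intro continuous_intros Nw wt)
      show "(\<lambda>s. k s * norm (w s - v s)) integrable_on {0..t}"
        unfolding k_def by (rule ai_cont_integrable[OF ai_cmult[OF ai_abs[OF li_ai[OF b]]]]) (intro continuous_intros wt)
      fix s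
      show "\<bar>\<beta> s\<bar> * norm (N (w s) - N (v s)) \<le> k s * norm (w s - v s)"
        using mult_left_mono[OF N[of "w s" "v s"], of "\<bar>\<beta> s\<bar>"] by (simp add: k_def algebra_simps)
    qed
    finally show "norm ((Phi_n U \<alpha> t 0 u0 - J (integral {0..t} (\<lambda>s. \<beta> s *\<^sub>R Phi_n U \<alpha> t s (N (w s)))))
             - (Phi_n U \<alpha> t 0 u0 - J (integral {0..t} (\<lambda>s. \<beta> s *\<^sub>R Phi_n U \<alpha> t s (N (v s))))))
        \<le> integral {0..t} (\<lambda>s. k s * norm (w s - v s))" .
  qed
qed

lemma B_comp_cont:
  assumes L: "L-lipschitz_on (cball 0 R) B" and w: "continuous_on S w" and wb: "\<And>s. s \<in> S \<Longrightarrow> norm (w s) \<le> R"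
  shows "continuous_on S (\<lambda>s. B (w s))"
  by (rule continuous_on_compose2[OF lipschitz_on_continuous_on[OF L] w]) (use wb in auto)

lemma unique_sol:
  assumes a: "loc_integrable \<alpha>" and b: "loc_integrable \<beta>" and T: "0 \<le> T"
    and Bl: "loc_lipschitz B" and J: "bounded_linear J" and Jn: "\<And>x. norm (J x) = norm x"
    and v: "mild_sol_n J U \<alpha> \<beta> B u0 T v" and w: "mild_sol_n J U \<alpha> \<beta> B u0 T w"
  shows "\<And>t. t \<in> {0..T} \<Longrightarrow> v t = w t"
proof -
  have vc: "continuous_on {0..T} v" and wc: "continuous_on {0..T} w" using v w by (auto simp: mild_sol_n_def)
  obtain R1 where R1: "\<And>s. s \<in> {0..T} \<Longrightarrow> norm (v s) \<le> R1" using cont_bound[OF vc] by metis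
  obtain R2 where R2: "\<And>s. s \<in> {0..T} \<Longrightarrow> norm (w s) \<le> R2" using cont_bound[OF wc] by metis
  define R where "R = max R1 R2"
  obtain L where L: "L-lipschitz_on (cball 0 R) B" using Bl unfolding loc_lipschitz_def by blast
  have L0: "L \<ge> 0" using lipschitz_on_nonneg[OF L] .
  have vR: "norm (v s) \<le> R" and wR: "norm (w s) \<le> R" if "s \<in> {0..T}" for s
    using R1[OF that] R2[OF that] by (auto simp: R_def)
  define k where "k s = L * \<bar>\<beta> s\<bar>" for s
  have k: "k absolutely_integrable_on {0..T}" unfolding k_def by (rule ai_cmult[OF ai_abs[OF li_ai[OF b]]])
  have k0: "\<And>s. 0 \<le> k s" using L0 by (simp add: k_def)
  obtain l where l: "l \<ge> 0" and ker: "\<And>t. t \<in> {0..T} \<Longrightarrow> integral {0..t} (\<lambda>s. k s * exp (l * s)) \<le> 1/2 * exp (l * t)"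
    using kernel_exp[OF k k0, of "1/2"] by auto
  have le: "norm (v t - w t) \<le> 0 + integral {0..t} (\<lambda>s. k s * norm (v s - w s))" if t: "t \<in> {0..T}" for t
  proof -
    have sub: "{0..t} \<subseteq> {0..T}" using t by auto
    have vt: "continuous_on {0..t} v" "continuous_on {0..t} w" using vc wc continuous_on_subset sub by blast+
    have Bv: "continuous_on {0..t} (\<lambda>s. B (v s))" by (rule B_comp_cont[OF L vt(1)]) (use vR sub in auto)
    have Bw: "continuous_on {0..t} (\<lambda>s. B (w s))" by (rule B_comp_cont[OF L vt(2)]) (use wR sub in auto)
    have ev: "v t = Phi_n U \<alpha> t 0 u0 - J (integral {0..t} (\<lambda>s. \<beta> s *\<^sub>R Phi_n U \<alpha> t s (B (v s))))"
      using v t by (auto simp: mild_sol_n_def)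
    have ew: "w t = Phi_n U \<alpha> t 0 u0 - J (integral {0..t} (\<lambda>s. \<beta> s *\<^sub>R Phi_n U \<alpha> t s (B (w s))))"
      using w t by (auto simp: mild_sol_n_def)
    have "norm (v t - w t) = norm (integral {0..t} (\<lambda>s. \<beta> s *\<^sub>R Phi_n U \<alpha> t s (B (v s)))
                 - integral {0..t} (\<lambda>s. \<beta> s *\<^sub>R Phi_n U \<alpha> t s (B (w s))))"
      unfolding ev ew by (rule J_diff_norm[OF J Jn])
    also have "\<dots> \<le> integral {0..t} (\<lambda>s. \<bar>\<beta> s\<bar> * norm (B (v s) - B (w s)))"
      by (rule int_diff_bound[OF a b Bv Bw])
    also have "\<dots> \<le> integral {0..t} (\<lambda>s. k s * norm (v s - w s))"
    proof (rule integral_le)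
      show "(\<lambda>s. \<bar>\<beta> s\<bar> * norm (B (v s) - B (w s))) integrable_on {0..t}"
        by (rule ai_cont_integrable[OF ai_abs[OF li_ai[OF b]]]) (intro continuous_intros Bv Bw)
      show "(\<lambda>s. k s * norm (v s - w s)) integrable_on {0..t}"
        unfolding k_def by (rule ai_cont_integrable[OF ai_cmult[OF ai_abs[OF li_ai[OF b]]]]) (intro continuous_intros vt)
      fix s assume s: "s \<in> {0..t}"
      have "norm (B (v s) - B (w s)) \<le> L * norm (v s - w s)"
        using lipschitz_onD[OF L, of "v s" "w s"] vR[of s] wR[of s] s sub by (auto simp: dist_norm)
      then show "\<bar>\<beta> s\<bar> * norm (B (v s) - B (w s)) \<le> k s * norm (v s - w s)"
        using mult_left_mono[of "norm (B (v s) - B (w s))" "L * norm (v s - w s)" "\<bar>\<beta> s\<bar>"] by (simp add: k_def algebra_simps)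
    qed
    finally show ?thesis by simp
  qed
  fix t assume t: "t \<in> {0..T}"
  have "norm (v t - w t) \<le> 2 * 0 * exp (l * T)"
    by (rule gronwall_exp[OF T k k0 _ _ l _ le t]) (use ker in \<open>auto intro!: continuous_intros vc wc\<close>)
  then show "v t = w t" by simp
qed

end



context grp begin

lemma decomp:
  assumes a: "loc_integrable \<alpha>" and b: "loc_integrable \<beta>" and J: "bounded_linear J" and Jn: "\<And>x. norm (J x) = norm x"
    and t: "0 \<le> t" and bc: "continuous_on {0..t} bf" and hc: "continuous_on {0..t} hw"
  shows "norm ((U t u0 - J (integral {0..t} (\<lambda>s. U (t - s) (bf s))))
              - (Phi_n U \<alpha> t 0 u0 - J (integral {0..t} (\<lambda>s. \<beta> s *\<^sub>R Phi_n U \<alpha> t s (hw s)))))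
     \<le> norm (u0 - U (Fa \<alpha> t - t) u0) + norm (integral {0..t} (\<lambda>s. (1 - \<beta> s) *\<^sub>R U (- s) (bf s)))
       + integral {0..t} (\<lambda>s. \<bar>\<beta> s\<bar> * norm (bf s - U ((Fa \<alpha> t - Fa \<alpha> s) - (t - s)) (bf s)))
       + integral {0..t} (\<lambda>s. \<bar>\<beta> s\<bar> * norm (bf s - hw s))"
proof -
  let ?F = "Fa \<alpha>"
  have Fc: "continuous_on {0..t} ?F" by (rule Fa_cont[OF a])
  have bi: "\<beta> absolutely_integrable_on {0..t}" by (rule li_ai[OF b])
  have b1i: "(\<lambda>s. 1 - \<beta> s) absolutely_integrable_on {0..t}" by (rule ai_diff[OF ai_const bi])
  define X where "X s = U (t - s) (bf s)" for s
  define Y where "Y s = U (?F t - ?F s) (bf s)" for s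
  define Z where "Z s = U (?F t - ?F s) (hw s)" for s
  define V where "V s = U (?F t - ?F s) (bf s - hw s)" for s
  have Xc: "continuous_on {0..t} X" unfolding X_def by (rule U_comp) (intro continuous_intros bc)+
  have Yc: "continuous_on {0..t} Y" unfolding Y_def by (rule U_comp) (intro continuous_intros bc Fc)+
  have Zc: "continuous_on {0..t} Z" unfolding Z_def by (rule U_comp) (intro continuous_intros hc Fc)+
  have Vc: "continuous_on {0..t} V" unfolding V_def by (rule U_comp) (intro continuous_intros bc hc Fc)+
  have i1: "(\<lambda>s. (1 - \<beta> s) *\<^sub>R X s) integrable_on {0..t}" by (rule integrable_scaleR_cont[OF b1i Xc])
  have i2: "(\<lambda>s. \<beta> s *\<^sub>R (X s - Y s)) integrable_on {0..t}" by (rule integrable_scaleR_cont[OF bi]) (intro continuous_intros Xc Yc)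
  have i3: "(\<lambda>s. \<beta> s *\<^sub>R V s) integrable_on {0..t}" by (rule integrable_scaleR_cont[OF bi Vc])
  have i4: "(\<lambda>s. \<beta> s *\<^sub>R Z s) integrable_on {0..t}" by (rule integrable_scaleR_cont[OF bi Zc])
  have VYZ: "V s = Y s - Z s" for s by (simp add: V_def Y_def Z_def U_diff)
  have A: "integral {0..t} (\<lambda>s. U (t - s) (bf s))
      = integral {0..t} (\<lambda>s. (1 - \<beta> s) *\<^sub>R X s) + integral {0..t} (\<lambda>s. \<beta> s *\<^sub>R (X s - Y s))
        + integral {0..t} (\<lambda>s. \<beta> s *\<^sub>R V s) + integral {0..t} (\<lambda>s. \<beta> s *\<^sub>R Z s)"
  proof -
    have "(\<lambda>s. U (t - s) (bf s)) = (\<lambda>s. (1 - \<beta> s) *\<^sub>R X s + \<beta> s *\<^sub>R (X s - Y s) + \<beta> s *\<^sub>R V s + \<beta> s *\<^sub>R Z s)"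
      by (rule ext) (simp add: VYZ X_def algebra_simps)
    then show ?thesis using i1 i2 i3 i4 by (simp add: integral_add integrable_add)
  qed
  have An: "integral {0..t} (\<lambda>s. \<beta> s *\<^sub>R Phi_n U \<alpha> t s (hw s)) = integral {0..t} (\<lambda>s. \<beta> s *\<^sub>R Z s)"
  proof (rule integral_cong)
    fix s assume "s \<in> {0..t}"
    then have "Phi_n U \<alpha> t s = U (?F t - ?F s)" by (intro Phi_n_eq[OF a]) auto
    then show "\<beta> s *\<^sub>R Phi_n U \<alpha> t s (hw s) = \<beta> s *\<^sub>R Z s" by (simp add: Z_def)
  qed
  have P0: "Phi_n U \<alpha> t 0 u0 = U (?F t) u0"
  proof -
    have "Phi_n U \<alpha> t 0 = U (?F t - ?F 0)" by (rule Phi_n_eq[OF a]) (use t in auto)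
    then show ?thesis by (simp add: Fa_def)
  qed
  define I1 where "I1 = integral {0..t} (\<lambda>s. (1 - \<beta> s) *\<^sub>R X s)"
  define I2 where "I2 = integral {0..t} (\<lambda>s. \<beta> s *\<^sub>R (X s - Y s))"
  define I3 where "I3 = integral {0..t} (\<lambda>s. \<beta> s *\<^sub>R V s)"
  have "(U t u0 - J (integral {0..t} (\<lambda>s. U (t - s) (bf s))))
              - (Phi_n U \<alpha> t 0 u0 - J (integral {0..t} (\<lambda>s. \<beta> s *\<^sub>R Phi_n U \<alpha> t s (hw s))))
       = (U t u0 - U (?F t) u0) - J (I1 + I2 + I3)"
    unfolding A An P0 I1_def I2_def I3_def
    by (simp add: linear_diff[OF bounded_linear.linear[OF J]] linear_add[OF bounded_linear.linear[OF J]] algebra_simps)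
  also have "norm \<dots> \<le> norm (U t u0 - U (?F t) u0) + (norm I1 + norm I2 + norm I3)"
  proof -
    have "norm ((U t u0 - U (?F t) u0) - J (I1 + I2 + I3)) \<le> norm (U t u0 - U (?F t) u0) + norm (J (I1 + I2 + I3))"
      by (rule norm_triangle_ineq4)
    moreover have "norm (J (I1 + I2 + I3)) \<le> norm I1 + norm I2 + norm I3"
      using Jn norm_triangle_ineq[of "I1 + I2" I3] norm_triangle_ineq[of I1 I2] by simp
    ultimately show ?thesis by linarith
  qed
  also have "norm (U t u0 - U (?F t) u0) = norm (u0 - U (?F t - t) u0)"
  proof -
    have "U (?F t) u0 = U t (U (?F t - t) u0)" by (simp add: U_add)
    then show ?thesis by (simp add: U_diff Unorm)
  qed
  also have "norm I1 = norm (integral {0..t} (\<lambda>s. (1 - \<beta> s) *\<^sub>R U (- s) (bf s)))"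
  proof -
    have ii: "(\<lambda>s. (1 - \<beta> s) *\<^sub>R U (- s) (bf s)) integrable_on {0..t}"
      by (rule integrable_scaleR_cont[OF b1i], rule U_comp) (intro continuous_intros bc)+
    have "I1 = integral {0..t} (\<lambda>s. U t ((1 - \<beta> s) *\<^sub>R U (- s) (bf s)))"
      unfolding I1_def by (rule integral_cong) (simp add: X_def U_scale U_add)
    also have "\<dots> = U t (integral {0..t} (\<lambda>s. (1 - \<beta> s) *\<^sub>R U (- s) (bf s)))" by (rule U_pull(2)[OF ii])
    finally show ?thesis by (simp add: Unorm)
  qed
  also have "norm I2 \<le> integral {0..t} (\<lambda>s. \<bar>\<beta> s\<bar> * norm (bf s - U ((?F t - ?F s) - (t - s)) (bf s)))"
  proof -
    have "norm I2 \<le> integral {0..t} (\<lambda>s. \<bar>\<beta> s\<bar> * norm (X s - Y s))"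
      unfolding I2_def by (rule norm_int_scaleR_le[OF bi]) (intro continuous_intros Xc Yc)
    also have "\<dots> = integral {0..t} (\<lambda>s. \<bar>\<beta> s\<bar> * norm (bf s - U ((?F t - ?F s) - (t - s)) (bf s)))"
    proof (rule integral_cong)
      fix s
      have "Y s = U (t - s) (U ((?F t - ?F s) - (t - s)) (bf s))" by (simp add: Y_def U_add)
      then have "X s - Y s = U (t - s) (bf s - U ((?F t - ?F s) - (t - s)) (bf s))" by (simp add: X_def U_diff)
      then show "\<bar>\<beta> s\<bar> * norm (X s - Y s) = \<bar>\<beta> s\<bar> * norm (bf s - U ((?F t - ?F s) - (t - s)) (bf s))"
        by (simp add: Unorm)
    qed
    finally show ?thesis .
  qed
  also have "norm I3 \<le> integral {0..t} (\<lambda>s. \<bar>\<beta> s\<bar> * norm (bf s - hw s))"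
  proof -
    have "norm I3 \<le> integral {0..t} (\<lambda>s. \<bar>\<beta> s\<bar> * norm (V s))"
      unfolding I3_def by (rule norm_int_scaleR_le[OF bi Vc])
    also have "\<dots> = integral {0..t} (\<lambda>s. \<bar>\<beta> s\<bar> * norm (bf s - hw s))" by (simp add: V_def Unorm)
    finally show ?thesis .
  qed
  finally show ?thesis by (simp add: add.assoc)
qed

end



lemma set_integrable_mult_cont:
  fixes \<gamma> \<theta> :: "real \<Rightarrow> real"
  assumes g: "set_integrable lborel {a..b} \<gamma>" and \<theta>: "continuous_on {a..b} \<theta>"
  shows "set_integrable lborel {a..b} (\<lambda>s. \<gamma> s * \<theta> s)"
proof -
  obtain K where K: "K \<ge> 0" and Kb: "\<And>x. x \<in> {a..b} \<Longrightarrow> norm (\<theta> x) \<le> K" using cont_bound[OF \<theta>] by metis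
  have gi: "integrable lborel (\<lambda>x. indicator {a..b} x *\<^sub>R \<gamma> x)" using g unfolding set_integrable_def .
  have m1: "(\<lambda>x. indicator {a..b} x *\<^sub>R \<gamma> x) \<in> borel_measurable lborel" by (rule borel_measurable_integrable[OF gi])
  have m2: "(\<lambda>x. indicator {a..b} x *\<^sub>R \<theta> x) \<in> borel_measurable lborel"
    using borel_measurable_continuous_on_indicator[OF _ \<theta>] by simp
  have eq: "(\<lambda>x. indicator {a..b} x *\<^sub>R (\<gamma> x * \<theta> x)) = (\<lambda>x. (indicator {a..b} x *\<^sub>R \<gamma> x) * (indicator {a..b} x *\<^sub>R \<theta> x))"
    by (rule ext) (simp add: indicator_def)
  show ?thesis unfolding set_integrable_def
  proof (rule Bochner_Integration.integrable_bound)
    show "integrable lborel (\<lambda>x. K *\<^sub>R (indicator {a..b} x *\<^sub>R \<gamma> x))" using gi by simp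
    show "(\<lambda>x. indicator {a..b} x *\<^sub>R (\<gamma> x * \<theta> x)) \<in> borel_measurable lborel"
      unfolding eq using m1 m2 by measurable
    show "AE x in lborel. norm (indicator {a..b} x *\<^sub>R (\<gamma> x * \<theta> x)) \<le> norm (K *\<^sub>R (indicator {a..b} x *\<^sub>R \<gamma> x))"
    proof (rule AE_I2)
      fix x show "norm (indicator {a..b} x *\<^sub>R (\<gamma> x * \<theta> x)) \<le> norm (K *\<^sub>R (indicator {a..b} x *\<^sub>R \<gamma> x))"
      proof (cases "x \<in> {a..b}")
        case True
        then have "\<bar>\<theta> x\<bar> \<le> K" using Kb by auto
        then have "\<bar>\<gamma> x\<bar> * \<bar>\<theta> x\<bar> \<le> \<bar>\<gamma> x\<bar> * K" by (simp add: mult_left_mono)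
        then show ?thesis using True K by (simp add: abs_mult mult.commute)
      qed simp
    qed
  qed
qed

lemma weak_HK:
  assumes wc: "weak_conv_one \<gamma>" and li: "\<And>n. loc_integrable (\<gamma> n)" and \<theta>: "continuous_on {a..b} \<theta>"
  shows "(\<lambda>n. integral {a..b} (\<lambda>s. \<gamma> n s * \<theta> s)) \<longlonglongrightarrow> integral {a..b} \<theta>"
proof -
  have "(\<lambda>n. LINT s:{a..b}|lborel. \<gamma> n s * \<theta> s) \<longlonglongrightarrow> (LINT s:{a..b}|lborel. \<theta> s)"
    using wc \<theta> unfolding weak_conv_one_def by blast
  moreover have "(LINT s:{a..b}|lborel. \<theta> s) = integral {a..b} \<theta>"
    by (rule lborel_to_HK(2)[OF borel_integrable_atLeastAtMost'[OF \<theta>]])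
  moreover have "(LINT s:{a..b}|lborel. \<gamma> n s * \<theta> s) = integral {a..b} (\<lambda>s. \<gamma> n s * \<theta> s)" for n
    by (rule lborel_to_HK(2)[OF set_integrable_mult_cont[OF _ \<theta>]]) (use li in \<open>simp add: loc_integrable_def\<close>)
  ultimately show ?thesis by simp
qed

lemma dom_HK:
  assumes li: "loc_integrable \<gamma>" and lb: "loc_integrable \<gamma>b" and ae: "AE s in lborel. \<bar>\<gamma> s\<bar> \<le> \<gamma>b s"
    and \<phi>: "continuous_on {a..b} \<phi>" and \<phi>0: "\<And>s. 0 \<le> \<phi> s"
  shows "integral {a..b} (\<lambda>s. \<bar>\<gamma> s\<bar> * \<phi> s) \<le> integral {a..b} (\<lambda>s. \<bar>\<gamma>b s\<bar> * \<phi> s)"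
proof (rule AE_integral_le)
  show "(\<lambda>s. \<bar>\<gamma> s\<bar> * \<phi> s) integrable_on {a..b}" by (rule ai_cont_integrable[OF ai_abs[OF li_ai[OF li]] \<phi>])
  show "(\<lambda>s. \<bar>\<gamma>b s\<bar> * \<phi> s) integrable_on {a..b}" by (rule ai_cont_integrable[OF ai_abs[OF li_ai[OF lb]] \<phi>])
  show "AE x in lborel. \<bar>\<gamma> x\<bar> * \<phi> x \<le> \<bar>\<gamma>b x\<bar> * \<phi> x"
    using ae by eventually_elim (use \<phi>0 in \<open>auto intro!: mult_right_mono\<close>)
qed

lemma F_unif:
  assumes wc: "weak_conv_one \<gamma>" and li: "\<And>n. loc_integrable (\<gamma> n)" and lb: "loc_integrable \<gamma>b"
    and ae: "\<And>n. AE s in lborel. \<bar>\<gamma> n s\<bar> \<le> \<gamma>b s" and T: "0 \<le> T" and e: "\<epsilon> > 0"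
  shows "eventually (\<lambda>n. \<forall>t\<in>{0..T}. \<bar>Fa (\<gamma> n) t - t\<bar> \<le> \<epsilon>) sequentially"
proof -
  have "eventually (\<lambda>n. \<forall>t\<in>{0..T}. \<bar>integral {0..t} (\<lambda>s. \<gamma> n s * 1) - integral {0..t} (\<lambda>s. 1)\<bar> \<le> \<epsilon>) sequentially"
  proof (rule weak_unif[OF T li_ai[OF li] ai_abs[OF li_ai[OF lb]] _ _ _ e])
    show "continuous_on {0..T} (\<lambda>s. 1::real)" by simp
    fix n a b assume "0 \<le> a" "a \<le> b" "b \<le> T"
    show "integral {a..b} (\<lambda>s. \<bar>\<gamma> n s\<bar>) \<le> integral {a..b} (\<lambda>s. \<bar>\<gamma>b s\<bar>)"
      using dom_HK[OF li lb ae, of a b "\<lambda>_. 1"] by simp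
  next
    fix t :: real assume "t \<in> {0..T}"
    show "(\<lambda>n. integral {0..t} (\<lambda>s. \<gamma> n s * 1)) \<longlonglongrightarrow> integral {0..t} (\<lambda>s. 1)"
      by (rule weak_HK[OF wc li]) simp
  qed
  then show ?thesis
    by (rule eventually_mono) (auto simp: Fa_def)
qed



context grp begin

lemma converge:
  assumes an: "\<And>n. loc_integrable (\<alpha> n)" and bn: "\<And>n. loc_integrable (\<beta> n)"
    and wa: "weak_conv_one \<alpha>" and wb: "weak_conv_one \<beta>"
    and lab: "loc_integrable \<alpha>b" and lbb: "loc_integrable \<beta>b"
    and da: "\<And>n. AE s in lborel. \<bar>\<alpha> n s\<bar> \<le> \<alpha>b s" and db: "\<And>n. AE s in lborel. \<bar>\<beta> n s\<bar> \<le> \<beta>b s"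
    and T: "0 < T" and J: "bounded_linear J" and Jn: "\<And>x. norm (J x) = norm x"
    and N: "\<And>x y. norm (N x - N y) \<le> Lc * norm (x - y)" and Lc: "Lc \<ge> 0"
    and uc: "continuous_on {0..T} u"
    and ueq: "\<And>t. t \<in> {0..T} \<Longrightarrow> u t = U t u0 - J (integral {0..t} (\<lambda>s. U (t - s) (N (u s))))"
    and Wc: "\<And>n. continuous_on {0..T} (W n)"
    and Weq: "\<And>n t. t \<in> {0..T} \<Longrightarrow> W n t = Phi_n U (\<alpha> n) t 0 u0 - J (integral {0..t} (\<lambda>s. \<beta> n s *\<^sub>R Phi_n U (\<alpha> n) t s (N (W n s))))"
    and e: "\<epsilon> > 0"
  shows "eventually (\<lambda>n. \<forall>t\<in>{0..T}. norm (u t - W n t) \<le> \<epsilon>) sequentially"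
proof -
  have Nc: "continuous_on UNIV N"
    by (rule lipschitz_on_continuous_on[of Lc], rule lipschitz_onI) (use N Lc in \<open>auto simp: dist_norm\<close>)
  have Nw: "continuous_on S (\<lambda>s. N (w s))" if "continuous_on S w" for S and w :: "real \<Rightarrow> 'a"
    by (rule continuous_on_compose2[OF Nc that]) auto
  define bf where "bf s = N (u s)" for s
  have bfc: "continuous_on {0..T} bf" unfolding bf_def by (rule Nw[OF uc])
  define \<beta>B where "\<beta>B s = \<bar>\<beta>b s\<bar>" for s
  have \<beta>Bai: "\<beta>B absolutely_integrable_on {0..T}" unfolding \<beta>B_def by (rule ai_abs[OF li_ai[OF lbb]])
  have \<beta>B0: "\<And>s. 0 \<le> \<beta>B s" by (simp add: \<beta>B_def)
  have \<beta>Beq: "\<beta>B = (\<lambda>s. \<bar>\<beta>b s\<bar>)" by (simp add: \<beta>B_def fun_eq_iff)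
  define KB where "KB = integral {0..T} \<beta>B"
  have KB0: "KB \<ge> 0" unfolding KB_def by (rule integral_nonneg[OF ai_integrable[OF \<beta>Bai]]) (simp add: \<beta>B0)
  define k where "k s = Lc * \<beta>B s" for s
  have k: "k absolutely_integrable_on {0..T}" unfolding k_def by (rule ai_cmult[OF \<beta>Bai])
  have k0: "\<And>s. 0 \<le> k s" using Lc \<beta>B0 by (simp add: k_def)
  obtain l where l: "l \<ge> 0" and ker: "\<And>t. t \<in> {0..T} \<Longrightarrow> integral {0..t} (\<lambda>s. k s * exp (l * s)) \<le> 1/2 * exp (l * t)"
    using kernel_exp[OF k k0, of "1/2"] by auto
  have kern_n: "integral {0..t} (\<lambda>s. Lc * \<bar>\<beta> n s\<bar> * exp (l * s)) \<le> exp (l * t) / 2" if t: "t \<in> {0..T}" for n t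
  proof -
    have "integral {0..t} (\<lambda>s. Lc * \<bar>\<beta> n s\<bar> * exp (l * s)) = integral {0..t} (\<lambda>s. \<bar>\<beta> n s\<bar> * (Lc * exp (l * s)))"
      by (rule integral_cong) (simp add: algebra_simps)
    also have "\<dots> \<le> integral {0..t} (\<lambda>s. \<bar>\<beta>b s\<bar> * (Lc * exp (l * s)))"
      by (rule dom_HK[OF bn lbb db]) (use Lc in \<open>auto intro!: continuous_intros\<close>)
    also have "\<dots> = integral {0..t} (\<lambda>s. k s * exp (l * s))"
      by (rule integral_cong) (simp add: k_def \<beta>B_def algebra_simps)
    also have "\<dots> \<le> exp (l * t) / 2" using ker[OF t] by simp
    finally show ?thesis .
  qed
  define \<eta> where "\<eta> = \<epsilon> / (6 * exp (l * T))"
  have \<eta>: "\<eta> > 0" using e by (simp add: \<eta>_def)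
  obtain \<rho>1 where \<rho>1: "\<rho>1 > 0" and h\<rho>1: "\<And>r s. \<bar>r\<bar> < \<rho>1 \<Longrightarrow> s \<in> {0..T} \<Longrightarrow> norm (U r u0 - u0) < \<eta>"
    using U_small[of T "\<lambda>_. u0" \<eta>] \<eta> by auto
  have \<eta>2: "\<eta> / (KB + 1) > 0" using \<eta> KB0 by simp
  obtain \<rho>2 where \<rho>2: "\<rho>2 > 0" and h\<rho>2: "\<And>r s. \<bar>r\<bar> < \<rho>2 \<Longrightarrow> s \<in> {0..T} \<Longrightarrow> norm (U r (bf s) - bf s) < \<eta> / (KB + 1)"
    using U_small[OF bfc \<eta>2] by auto
  define \<rho> where "\<rho> = min \<rho>1 \<rho>2 / 3"
  have \<rho>: "\<rho> > 0" using \<rho>1 \<rho>2 by (simp add: \<rho>_def)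
  have ev1: "eventually (\<lambda>n. \<forall>t\<in>{0..T}. \<bar>Fa (\<alpha> n) t - t\<bar> \<le> \<rho>) sequentially"
    by (rule F_unif[OF wa an lab da _ \<rho>]) (use T in auto)
  have gc: "continuous_on {0..T} (\<lambda>s. U (- s) (bf s))" by (rule U_comp) (intro continuous_intros bfc)+
  have ev2: "eventually (\<lambda>n. \<forall>t\<in>{0..T}. norm (integral {0..t} (\<lambda>s. (1 - \<beta> n s) *\<^sub>R U (- s) (bf s))) \<le> \<eta>) sequentially"
  proof (rule weak_vec[OF T li_ai[OF bn] \<beta>Bai \<beta>B0 _ _ gc \<eta>])
    fix n a b assume "0 \<le> a" "a \<le> b" "b \<le> T"
    show "integral {a..b} (\<lambda>s. \<bar>\<beta> n s\<bar>) \<le> integral {a..b} \<beta>B"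
      using dom_HK[OF bn lbb db, of a b "\<lambda>_. 1"] by (simp add: \<beta>Beq)
  next
    fix \<psi> :: "real \<Rightarrow> real" and t :: real assume \<psi>: "continuous_on {0..T} \<psi>" and t: "t \<in> {0..T}"
    show "(\<lambda>n. integral {0..t} (\<lambda>s. \<beta> n s * \<psi> s)) \<longlonglongrightarrow> integral {0..t} \<psi>"
      by (rule weak_HK[OF wb bn]) (rule continuous_on_subset[OF \<psi>], use t in auto)
  qed
  show ?thesis
  proof (rule eventually_mono[OF eventually_conj[OF ev1 ev2]], elim conjE)
    fix n
    assume H1: "\<forall>t\<in>{0..T}. \<bar>Fa (\<alpha> n) t - t\<bar> \<le> \<rho>"
      and H2: "\<forall>t\<in>{0..T}. norm (integral {0..t} (\<lambda>s. (1 - \<beta> n s) *\<^sub>R U (- s) (bf s))) \<le> \<eta>"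
    define ee where "ee t = norm (u t - W n t)" for t
    have eec: "continuous_on {0..T} ee" unfolding ee_def by (intro continuous_intros uc Wc)
    have kn: "(\<lambda>s. Lc * \<bar>\<beta> n s\<bar>) absolutely_integrable_on {0..T}" by (rule ai_cmult[OF ai_abs[OF li_ai[OF bn]]])
    have le: "ee t \<le> 3 * \<eta> + integral {0..t} (\<lambda>s. Lc * \<bar>\<beta> n s\<bar> * ee s)" if t: "t \<in> {0..T}" for t
    proof -
      have sub: "{0..t} \<subseteq> {0..T}" using t by auto
      have bft: "continuous_on {0..t} bf" by (rule continuous_on_subset[OF bfc sub])
      have Wt: "continuous_on {0..t} (W n)" by (rule continuous_on_subset[OF Wc sub])
      have ut: "continuous_on {0..t} u" by (rule continuous_on_subset[OF uc sub])
      have hwt: "continuous_on {0..t} (\<lambda>s. N (W n s))" by (rule Nw[OF Wt])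
      have "ee t \<le> norm (u0 - U (Fa (\<alpha> n) t - t) u0) + norm (integral {0..t} (\<lambda>s. (1 - \<beta> n s) *\<^sub>R U (- s) (bf s)))
       + integral {0..t} (\<lambda>s. \<bar>\<beta> n s\<bar> * norm (bf s - U ((Fa (\<alpha> n) t - Fa (\<alpha> n) s) - (t - s)) (bf s)))
       + integral {0..t} (\<lambda>s. \<bar>\<beta> n s\<bar> * norm (bf s - N (W n s)))"
        unfolding ee_def ueq[OF t] Weq[OF t] bf_def[symmetric]
        by (rule decomp[OF an bn J Jn _ bft hwt]) (use t in auto)
      also have "norm (u0 - U (Fa (\<alpha> n) t - t) u0) \<le> \<eta>"
      proof -
        have "\<bar>Fa (\<alpha> n) t - t\<bar> \<le> \<rho>" using H1 t by auto
        moreover have "\<rho> < \<rho>1" using \<rho>1 \<rho>2 by (simp add: \<rho>_def)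
        ultimately have "\<bar>Fa (\<alpha> n) t - t\<bar> < \<rho>1" by linarith
        then show ?thesis using h\<rho>1[of "Fa (\<alpha> n) t - t" 0] T by (simp add: norm_minus_commute)
      qed
      also have "norm (integral {0..t} (\<lambda>s. (1 - \<beta> n s) *\<^sub>R U (- s) (bf s))) \<le> \<eta>" using H2 t by auto
      also have "integral {0..t} (\<lambda>s. \<bar>\<beta> n s\<bar> * norm (bf s - U ((Fa (\<alpha> n) t - Fa (\<alpha> n) s) - (t - s)) (bf s))) \<le> \<eta>"
      proof -
        have "integral {0..t} (\<lambda>s. \<bar>\<beta> n s\<bar> * norm (bf s - U ((Fa (\<alpha> n) t - Fa (\<alpha> n) s) - (t - s)) (bf s)))
           \<le> integral {0..t} (\<lambda>s. \<bar>\<beta> n s\<bar> * (\<eta> / (KB + 1)))"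
        proof (rule integral_le)
          show "(\<lambda>s. \<bar>\<beta> n s\<bar> * norm (bf s - U ((Fa (\<alpha> n) t - Fa (\<alpha> n) s) - (t - s)) (bf s))) integrable_on {0..t}"
            by (rule ai_cont_integrable[OF ai_abs[OF li_ai[OF bn]]], intro continuous_intros bft, rule U_comp)
               (intro continuous_intros bft Fa_cont[OF an])+
          show "(\<lambda>s. \<bar>\<beta> n s\<bar> * (\<eta> / (KB + 1))) integrable_on {0..t}"
            by (rule ai_cont_integrable[OF ai_abs[OF li_ai[OF bn]]]) simp
          fix s assume s: "s \<in> {0..t}"
          have "\<bar>Fa (\<alpha> n) t - t\<bar> \<le> \<rho>" "\<bar>Fa (\<alpha> n) s - s\<bar> \<le> \<rho>" using H1 t s sub by auto
          moreover have "3 * \<rho> \<le> \<rho>2" by (simp add: \<rho>_def)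
          moreover have "\<rho> > 0" by (rule \<rho>)
          ultimately have "\<bar>(Fa (\<alpha> n) t - Fa (\<alpha> n) s) - (t - s)\<bar> < \<rho>2" by (simp add: abs_le_iff abs_less_iff)
          then have "norm (bf s - U ((Fa (\<alpha> n) t - Fa (\<alpha> n) s) - (t - s)) (bf s)) \<le> \<eta> / (KB + 1)"
            using h\<rho>2[of _ s] s sub by (force simp: norm_minus_commute)
          then show "\<bar>\<beta> n s\<bar> * norm (bf s - U ((Fa (\<alpha> n) t - Fa (\<alpha> n) s) - (t - s)) (bf s)) \<le> \<bar>\<beta> n s\<bar> * (\<eta> / (KB + 1))"
            by (rule mult_left_mono) simp_all
        qed
        also have "\<dots> = integral {0..t} (\<lambda>s. \<bar>\<beta> n s\<bar>) * (\<eta> / (KB + 1))" by simp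
        also have "integral {0..t} (\<lambda>s. \<bar>\<beta> n s\<bar>) \<le> KB"
        proof -
          have "integral {0..t} (\<lambda>s. \<bar>\<beta> n s\<bar>) \<le> integral {0..t} \<beta>B"
            using dom_HK[OF bn lbb db, of 0 t "\<lambda>_. 1"] by (simp add: \<beta>Beq)
          also have "\<dots> \<le> KB" unfolding KB_def
            by (rule integral_subset_le[OF sub ai_integrable[OF ai_sub[OF \<beta>Bai sub]] ai_integrable[OF \<beta>Bai]]) (simp add: \<beta>B0)
          finally show ?thesis .
        qed
        then have "integral {0..t} (\<lambda>s. \<bar>\<beta> n s\<bar>) * (\<eta> / (KB + 1)) \<le> KB * (\<eta> / (KB + 1))"
          using \<eta>2 by (intro mult_right_mono) auto
        also have "\<dots> \<le> \<eta>" using \<eta> KB0 by (simp add: field_simps)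
        finally show ?thesis .
      qed
      also have "integral {0..t} (\<lambda>s. \<bar>\<beta> n s\<bar> * norm (bf s - N (W n s))) \<le> integral {0..t} (\<lambda>s. Lc * \<bar>\<beta> n s\<bar> * ee s)"
      proof (rule integral_le)
        show "(\<lambda>s. \<bar>\<beta> n s\<bar> * norm (bf s - N (W n s))) integrable_on {0..t}"
          by (rule ai_cont_integrable[OF ai_abs[OF li_ai[OF bn]]]) (intro continuous_intros bft hwt)
        show "(\<lambda>s. Lc * \<bar>\<beta> n s\<bar> * ee s) integrable_on {0..t}"
          by (rule ai_cont_integrable[OF ai_cmult[OF ai_abs[OF li_ai[OF bn]]]]) (unfold ee_def, intro continuous_intros ut Wt)
        fix s
        show "\<bar>\<beta> n s\<bar> * norm (bf s - N (W n s)) \<le> Lc * \<bar>\<beta> n s\<bar> * ee s"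
          using mult_left_mono[OF N[of "u s" "W n s"], of "\<bar>\<beta> n s\<bar>"] by (simp add: bf_def ee_def algebra_simps)
      qed
      finally show ?thesis by simp
    qed
    have "ee t \<le> 2 * (3 * \<eta>) * exp (l * T)" if t: "t \<in> {0..T}" for t
      by (rule gronwall_exp[OF _ kn _ eec _ l kern_n le t]) (use T Lc in \<open>auto simp: ee_def\<close>)
    moreover have "2 * (3 * \<eta>) * exp (l * T) = \<epsilon>" by (simp add: \<eta>_def)
    ultimately show "\<forall>t\<in>{0..T}. norm (u t - W n t) \<le> \<epsilon>" by (simp add: ee_def)
  qed
qed

end


theorem theorem3p1:
  fixes J :: "'a::{real_inner, complete_space} \<Rightarrow> 'a"
    and D :: "'a set" and A :: "'a \<Rightarrow> 'a" and U :: "real \<Rightarrow> 'a \<Rightarrow> 'a"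
    and B :: "'a \<Rightarrow> 'a"
    and \<alpha> \<beta> :: "nat \<Rightarrow> real \<Rightarrow> real" and \<alpha>bar \<beta>bar :: "real \<Rightarrow> real"
    and u0 :: 'a and T :: real and u :: "real \<Rightarrow> 'a"
  assumes "complex_structure J"
    and "self_adjoint_op J D A"
    and "unitary_group_generated J D A U"
    and "loc_lipschitz B" and "B 0 = 0"
    and "\<And>n. loc_integrable (\<alpha> n)" and "\<And>n. loc_integrable (\<beta> n)"
    and "weak_conv_one \<alpha>" and "weak_conv_one \<beta>"
    and "loc_integrable \<alpha>bar" and "loc_integrable \<beta>bar"
    and "\<And>n. AE s in lborel. \<bar>\<alpha> n s\<bar> \<le> \<alpha>bar s"
    and "\<And>n. AE s in lborel. \<bar>\<beta> n s\<bar> \<le> \<beta>bar s"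
    and "0 < T"
    and "mild_sol J U B u0 T u"
  shows "\<exists>n0. (\<forall>n\<ge>n0. \<exists>w. mild_sol_n J U (\<alpha> n) (\<beta> n) B u0 T w)
           \<and> (\<forall>un :: nat \<Rightarrow> real \<Rightarrow> 'a. (\<forall>n\<ge>n0. mild_sol_n J U (\<alpha> n) (\<beta> n) B u0 T (un n)) \<longrightarrow>
                (\<lambda>n. SUP t\<in>{0..T}. norm (u t - un n t)) \<longlonglongrightarrow> 0)"
  proof -
  note cs = assms(1) and ug = assms(3) and Bl = assms(4) and an = assms(6) and bn = assms(7)
    and wa = assms(8) and wb = assms(9) and lab = assms(10) and lbb = assms(11) and da = assms(12)
    and db = assms(13) and T = assms(14) and ms = assms(15)
  have Jlin: "linear J" and Jinner: "\<And>x y. inner (J x) (J y) = inner x y"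
    using cs by (auto simp: complex_structure_def)
  have Jn: "\<And>x. norm (J x) = norm x" by (simp add: norm_eq_sqrt_inner Jinner)
  have J: "bounded_linear J"
    by (rule bounded_linear_intro[where K=1]) (auto simp: linear_add[OF Jlin] linear_scale[OF Jlin] Jn)
  have Uf: "U 0 = id" "\<And>s t. U (s + t) = U s \<circ> U t" "\<And>t. linear (U t)" "\<And>t x. norm (U t x) = norm x"
      "\<And>x. continuous_on UNIV (\<lambda>t. U t x)"
    using ug unfolding unitary_group_generated_def by auto
  interpret grp U by (rule grp.intro[OF Uf])
  have uc: "continuous_on {0..T} u" and ueqB: "\<And>t. t \<in> {0..T} \<Longrightarrow> u t = U t u0 - J (integral {0..t} (\<lambda>s. U (t - s) (B (u s))))"
    using ms unfolding mild_sol_def by auto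
  obtain M where M0: "M \<ge> 0" and Mb: "\<And>t. t \<in> {0..T} \<Longrightarrow> norm (u t) \<le> M" using cont_bound[OF uc] by metis
  define R where "R = M + 1"
  have R0: "R \<ge> 0" using M0 by (simp add: R_def)
  obtain L where L: "L-lipschitz_on (cball 0 R) B" using Bl unfolding loc_lipschitz_def by blast
  have L0: "L \<ge> 0" by (rule lipschitz_on_nonneg[OF L])
  define N where "N x = B (trunc R x)" for x
  have Nlip: "norm (N x - N y) \<le> (2 * L) * norm (x - y)" for x y
  proof -
    have "norm (N x - N y) \<le> L * norm (trunc R x - trunc R y)"
      using lipschitz_onD[OF L, of "trunc R x" "trunc R y"] trunc_norm[OF R0]
      by (auto simp: N_def dist_norm)
    also have "\<dots> \<le> L * (2 * norm (x - y))" by (rule mult_left_mono[OF trunc_lip[OF R0] L0])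
    finally show ?thesis by simp
  qed
  have Lc: "2 * L \<ge> 0" using L0 by simp
  have ueq: "u t = U t u0 - J (integral {0..t} (\<lambda>s. U (t - s) (N (u s))))" if t: "t \<in> {0..T}" for t
  proof -
    have "integral {0..t} (\<lambda>s. U (t - s) (B (u s))) = integral {0..t} (\<lambda>s. U (t - s) (N (u s)))"
    proof (rule integral_cong)
      fix s assume "s \<in> {0..t}"
      then have "norm (u s) \<le> R" using Mb[of s] t by (auto simp: R_def)
      then show "U (t - s) (B (u s)) = U (t - s) (N (u s))" by (simp add: N_def trunc_id)
    qed
    then show ?thesis using ueqB[OF t] by simp
  qed
  have "\<forall>n. \<exists>w. continuous_on {0..T} w \<and>
     (\<forall>t\<in>{0..T}. Phi_n U (\<alpha> n) t 0 u0 - J (integral {0..t} (\<lambda>s. \<beta> n s *\<^sub>R Phi_n U (\<alpha> n) t s (N (w s)))) = w t)"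
    using exist_global[OF an bn _ Nlip Lc J Jn] T by auto
  then obtain W where Wc: "\<And>n. continuous_on {0..T} (W n)"
    and Weq0: "\<And>n t. t \<in> {0..T} \<Longrightarrow> Phi_n U (\<alpha> n) t 0 u0 - J (integral {0..t} (\<lambda>s. \<beta> n s *\<^sub>R Phi_n U (\<alpha> n) t s (N (W n s)))) = W n t"
    by metis
  have conv: "eventually (\<lambda>n. \<forall>t\<in>{0..T}. norm (u t - W n t) \<le> \<epsilon>) sequentially" if e: "\<epsilon> > 0" for \<epsilon>
    by (rule converge[OF an bn wa wb lab lbb da db T J Jn Nlip Lc uc ueq Wc Weq0[symmetric] e])
  obtain n0 where n0: "\<And>n t. n \<ge> n0 \<Longrightarrow> t \<in> {0..T} \<Longrightarrow> norm (u t - W n t) \<le> 1/2"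
  proof -
    have "eventually (\<lambda>n. \<forall>t\<in>{0..T}. norm (u t - W n t) \<le> 1/2) sequentially" by (rule conv) simp
    then obtain N0 where "\<forall>n\<ge>N0. \<forall>t\<in>{0..T}. norm (u t - W n t) \<le> 1/2"
      unfolding eventually_sequentially by blast
    then show ?thesis using that by blast
  qed
  have WR: "norm (W n t) \<le> R" if "n \<ge> n0" "t \<in> {0..T}" for n t
  proof -
    have "norm (W n t) \<le> norm (u t) + norm (W n t - u t)" by (rule norm_triangle_sub)
    then have "norm (W n t) \<le> norm (u t) + norm (u t - W n t)" by (simp add: norm_minus_commute)
    then show ?thesis using n0[OF that] Mb[OF that(2)] by (simp add: R_def)
  qed
  have Wsol: "mild_sol_n J U (\<alpha> n) (\<beta> n) B u0 T (W n)" if n: "n \<ge> n0" for n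
    unfolding mild_sol_n_def
  proof (intro conjI ballI)
    show "continuous_on {0..T} (W n)" by (rule Wc)
    fix t assume t: "t \<in> {0..T}"
    have sub: "{0..t} \<subseteq> {0..T}" using t by auto
    have BW: "continuous_on {0..t} (\<lambda>s. B (W n s))"
      by (rule B_comp_cont[OF L continuous_on_subset[OF Wc sub]]) (use WR n sub in auto)
    show "(\<lambda>s. \<beta> n s *\<^sub>R Phi_n U (\<alpha> n) t s (B (W n s))) integrable_on {0..t}"
      by (rule integ[OF an bn BW])
    have "integral {0..t} (\<lambda>s. \<beta> n s *\<^sub>R Phi_n U (\<alpha> n) t s (N (W n s)))
        = integral {0..t} (\<lambda>s. \<beta> n s *\<^sub>R Phi_n U (\<alpha> n) t s (B (W n s)))"
    proof (rule integral_cong)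
      fix s assume "s \<in> {0..t}"
      then have "norm (W n s) \<le> R" using WR[OF n, of s] sub by auto
      then show "\<beta> n s *\<^sub>R Phi_n U (\<alpha> n) t s (N (W n s)) = \<beta> n s *\<^sub>R Phi_n U (\<alpha> n) t s (B (W n s))"
        by (simp add: N_def trunc_id)
    qed
    then show "W n t = Phi_n U (\<alpha> n) t 0 u0 - J (integral {0..t} (\<lambda>s. \<beta> n s *\<^sub>R Phi_n U (\<alpha> n) t s (B (W n s))))"
      using Weq0[OF t, of n] by simp
  qed
  show ?thesis
  proof (intro exI[of _ n0] conjI allI impI)
    fix n :: nat assume "n \<ge> n0" then show "\<exists>w. mild_sol_n J U (\<alpha> n) (\<beta> n) B u0 T w" using Wsol by blast
  next
    fix un :: "nat \<Rightarrow> real \<Rightarrow> 'a"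
    assume H: "\<forall>n\<ge>n0. mild_sol_n J U (\<alpha> n) (\<beta> n) B u0 T (un n)"
    have eqW: "un n t = W n t" if "n \<ge> n0" "t \<in> {0..T}" for n t
    proof -
      have v: "mild_sol_n J U (\<alpha> n) (\<beta> n) B u0 T (un n)" using H that(1) by blast
      show ?thesis by (rule unique_sol[OF an bn _ Bl J Jn v Wsol[OF that(1)] that(2)]) (use T in simp)
    qed
    show "(\<lambda>n. SUP t\<in>{0..T}. norm (u t - un n t)) \<longlonglongrightarrow> 0"
    proof (rule LIMSEQ_I)
      fix r :: real assume r: "r > 0"
      obtain n1 where n1: "\<And>n t. n \<ge> n1 \<Longrightarrow> t \<in> {0..T} \<Longrightarrow> norm (u t - W n t) \<le> r / 2"
      proof -
        have "eventually (\<lambda>n. \<forall>t\<in>{0..T}. norm (u t - W n t) \<le> r/2) sequentially" by (rule conv) (use r in simp)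
        then obtain N0 where "\<forall>n\<ge>N0. \<forall>t\<in>{0..T}. norm (u t - W n t) \<le> r/2"
          unfolding eventually_sequentially by blast
        then show ?thesis using that by blast
      qed
      show "\<exists>no. \<forall>n\<ge>no. norm ((SUP t\<in>{0..T}. norm (u t - un n t)) - 0) < r"
      proof (intro exI[of _ "max n0 n1"] allI impI)
        fix n assume n: "max n0 n1 \<le> n"
        have bnd: "norm (u t - un n t) \<le> r / 2" if "t \<in> {0..T}" for t
        proof -
          have "n \<ge> n1" "n \<ge> n0" using n by auto
          then show ?thesis using n1[of n t] eqW[of n t] that by simp
        qed
        have ne: "{0..T} \<noteq> {}" using T by auto
        have S1: "(SUP t\<in>{0..T}. norm (u t - un n t)) \<le> r / 2"
          by (rule cSUP_least[OF ne bnd])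
        have bdd: "bdd_above ((\<lambda>t. norm (u t - un n t)) ` {0..T})"
          by (rule bdd_aboveI2[of _ _ "r/2"]) (rule bnd)
        have "0 \<in> {0..T}" using T by simp
        then have "norm (u 0 - un n 0) \<le> (SUP t\<in>{0..T}. norm (u t - un n t))" by (rule cSUP_upper[OF _ bdd])
        then have S0: "0 \<le> (SUP t\<in>{0..T}. norm (u t - un n t))" by (rule order_trans[OF norm_ge_zero])
        show "norm ((SUP t\<in>{0..T}. norm (u t - un n t)) - 0) < r" using S0 S1 r by simp
      qed
    qed
  qed
qed


end
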